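(* Let $n\times n$ $(0,1)$ matrices $A=\begin{bmatrix} 0 & J_{k_1,k_2} & X_1\\ J_{k_1,k_2} & 0 & X_2\\ X_3 & X_4 & Y\end{bmatrix}$ and $B=\begin{bmatrix} J_{k_1,k_2} & 0 & X_1\\ 0 & J_{k_1,k_2} & X_2\\ X_3 & X_4 & Y\end{bmatrix}$ (with $k_1,k_2>0$, $\mathbf{1}^TX_1=\mathbf{1}^TX_2$, $X_3\mathbf{1}=X_4\mathbf{1}$) be Gram mates with all distinct singular values, where $\mathrm{rank}(A-B)=1$. Then, $A$ and $B$ are isomorphic if and only if the remaining matrix $Y$ is fixable.
   Context: $J_{p,q}$ is the $p\times q$ all-ones matrix. Two $(0,1)$ matrices $A\neq B$ are Gram mates if $AA^T=BB^T$ and $A^TA=B^TB$; isomorphic if $B=PAQ$ for permutation matrices $P,Q$. For $(0,1)$ matrices $Z_1,Z_2$ of equal size, $\mathcal R_{Z_1,Z_2}$ is the set of triples $(P_1,P_2,Q)$ of permutation matrices with $Z_2=P_1Z_1Q$ and $Z_1=P_2Z_2Q$, and $\mathcal L_{Z_1,Z_2}$ is the set of triples $(P,Q_1,Q_2)$ of permutation matrices with $Z_1=PZ_1Q_1$ and $Z_2=PZ_2Q_2$. $Y$ is fixable if there exist permutation matrices $P,Q$ with $Y=PYQ$ such that either (i) $(P_1,P_2,Q)\in\mathcal R_{X_1,X_2}$ and $(P,Q_3,Q_4)\in\mathcal L_{X_3,X_4}$ for some $P_1,P_2,Q_3,Q_4$, or (ii) $(Q_3,Q_4,P^T)\in\mathcal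 R_{X_3^T,X_4^T}$ and $(Q^T,P_1,P_2)\in\mathcal L_{X_1^T,X_2^T}$ for some $P_1,P_2,Q_3,Q_4$. *)

theory Defs
  imports "Jordan_Normal_Form.DL_Rank" "Jordan_Normal_Form.Char_Poly"
begin

definition zo_mat :: "nat \<Rightarrow> nat \<Rightarrow> real mat \<Rightarrow> bool" where
  "zo_mat m n M \<longleftrightarrow> M \<in> carrier_mat m n \<and> (\<forall>i<m. \<forall>j<n. M $$ (i,j) \<in> {0,1})"

definition ones_mat :: "nat \<Rightarrow> nat \<Rightarrow> real mat" where
  "ones_mat p q = mat p q (\<lambda>_. 1)"

definition ones_vec :: "nat \<Rightarrow> real vec" where
  "ones_vec n = vec n (\<lambda>_. 1)"

definition hcat :: "real mat \<Rightarrow> real mat \<Rightarrow> real mat" where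
  "hcat M N = four_block_mat M N (0\<^sub>m 0 (dim_col M)) (0\<^sub>m 0 (dim_col N))"

definition block3 :: "real mat \<Rightarrow> real mat \<Rightarrow> real mat \<Rightarrow> real mat \<Rightarrow> real mat \<Rightarrow> real mat
   \<Rightarrow> real mat \<Rightarrow> real mat \<Rightarrow> real mat \<Rightarrow> real mat" where
  "block3 M11 M12 M13 M21 M22 M23 M31 M32 M33 =
     hcat M11 (hcat M12 M13) @\<^sub>r hcat M21 (hcat M22 M23) @\<^sub>r hcat M31 (hcat M32 M33)"

definition perm_mat :: "nat \<Rightarrow> real mat \<Rightarrow> bool" where
  "perm_mat m P \<longleftrightarrow> (\<exists>\<sigma>. \<sigma> permutes {..<m} \<and> P = mat m m (\<lambda>(i,j). if \<sigma> i = j then 1 else 0))"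

definition gram_mates :: "real mat \<Rightarrow> real mat \<Rightarrow> bool" where
  "gram_mates A B \<longleftrightarrow> A \<noteq> B \<and> A * transpose_mat A = B * transpose_mat B
      \<and> transpose_mat A * A = transpose_mat B * B"

definition isomorphic :: "nat \<Rightarrow> nat \<Rightarrow> real mat \<Rightarrow> real mat \<Rightarrow> bool" where
  "isomorphic m n A B \<longleftrightarrow> (\<exists>P Q. perm_mat m P \<and> perm_mat n Q \<and> B = P * A * Q)"

(* multiplicity of s \<ge> 0 as a singular value of A: algebraic multiplicity of s^2
   as an eigenvalue of A^T A *)
definition sv_mult :: "real mat \<Rightarrow> real \<Rightarrow> nat" where
  "sv_mult A s = order (s^2) (char_poly (transpose_mat A * A))"

definition distinct_singular_values :: "real mat \<Rightarrow> bool" where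
  "distinct_singular_values A \<longleftrightarrow> (\<forall>s\<ge>0. sv_mult A s \<le> 1)"

definition R_set :: "nat \<Rightarrow> nat \<Rightarrow> real mat \<Rightarrow> real mat \<Rightarrow> (real mat \<times> real mat \<times> real mat) set" where
  "R_set p q Z1 Z2 = {(P1,P2,Q). perm_mat p P1 \<and> perm_mat p P2 \<and> perm_mat q Q
      \<and> Z2 = P1 * Z1 * Q \<and> Z1 = P2 * Z2 * Q}"

definition L_set :: "nat \<Rightarrow> nat \<Rightarrow> real mat \<Rightarrow> real mat \<Rightarrow> (real mat \<times> real mat \<times> real mat) set" where
  "L_set p q Z1 Z2 = {(P,Q1,Q2). perm_mat p P \<and> perm_mat q Q1 \<and> perm_mat q Q2
      \<and> Z1 = P * Z1 * Q1 \<and> Z2 = P * Z2 * Q2}"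

definition fixable :: "nat \<Rightarrow> nat \<Rightarrow> nat \<Rightarrow> nat \<Rightarrow> real mat \<Rightarrow> real mat \<Rightarrow> real mat \<Rightarrow> real mat
    \<Rightarrow> real mat \<Rightarrow> bool" where
  "fixable k1 k2 r c X1 X2 X3 X4 Y \<longleftrightarrow>
     (\<exists>P Q. perm_mat r P \<and> perm_mat c Q \<and> Y = P * Y * Q \<and>
        ((\<exists>P1 P2 Q3 Q4. (P1,P2,Q) \<in> R_set k1 c X1 X2 \<and> (P,Q3,Q4) \<in> L_set r k2 X3 X4)
         \<or> (\<exists>P1 P2 Q3 Q4. (Q3,Q4,transpose_mat P) \<in> R_set k2 r (transpose_mat X3) (transpose_mat X4)
                  \<and> (transpose_mat Q,P1,P2) \<in> L_set c k1 (transpose_mat X1) (transpose_mat X2))))"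

end

theory Submission
  imports Defs "Jordan_Normal_Form.Jordan_Normal_Form_Uniqueness" "Jordan_Normal_Form.Jordan_Normal_Form_Existence"
begin


lemma sum_list_min1_le: "sum_list (map (min (1::nat)) xs) \<le> sum_list xs"
  by (induct xs) auto

lemma two_le_order_complex:
  fixes M :: "complex mat"
  assumes M: "M \<in> carrier_mat n n" and u: "u \<in> carrier_vec n" and v: "v \<in> carrier_vec n"
    and Mu: "M *\<^sub>v u = ev \<cdot>\<^sub>v u" and Mv: "M *\<^sub>v v = ev \<cdot>\<^sub>v v"
    and u0: "u \<noteq> 0\<^sub>v n" and indep: "\<forall>a. v \<noteq> a \<cdot>\<^sub>v u"
  shows "2 \<le> Polynomial.order ev (char_poly M)"
proof -
  from degree_monic_char_poly[OF M] have lc: "lead_coeff (char_poly M) = 1" by auto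
  from fundamental_theorem_algebra_factorized[of "char_poly M"] lc
  obtain as where "char_poly M = (\<Prod>a\<leftarrow>as. [:- a, 1:])" by (metis smult_1_left)
  from jordan_nf_exists[OF M this] obtain n_as where jnf: "jordan_nf M n_as" by auto
  let ?C = "char_matrix M ev"
  have C: "?C \<in> carrier_mat n n" using M by auto
  have Cpow: "?C ^\<^sub>m 1 = ?C" using C by simp
  interpret K: kernel n n ?C by (unfold_locales, rule C)
  have Cz: "?C *\<^sub>v x = 0\<^sub>v n" if x: "x \<in> carrier_vec n" and Mx: "M *\<^sub>v x = ev \<cdot>\<^sub>v x" for x
  proof -
    have 1: "?C *\<^sub>v x = M *\<^sub>v x + ((-ev) \<cdot>\<^sub>m 1\<^sub>m n) *\<^sub>v x" unfolding char_matrix_def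
      using M x by (simp add: add_mult_distrib_mat_vec)
    have 2: "((-ev) \<cdot>\<^sub>m 1\<^sub>m n) *\<^sub>v x = (-ev) \<cdot>\<^sub>v x"
      using x by (intro eq_vecI) (auto simp: mult_mat_vec_def scalar_prod_def row_def sum_negf if_distrib[of "\<lambda>t. _ * t"] if_distrib[of "\<lambda>t. t * _"] cong: if_cong)
    show ?thesis unfolding 1 2 Mx using x by (intro eq_vecI) auto
  qed
  have uk: "u \<in> mat_kernel ?C" by (rule mat_kernelI[OF C u Cz[OF u Mu]])
  have vk: "v \<in> mat_kernel ?C" by (rule mat_kernelI[OF C v Cz[OF v Mv]])
  have uv: "u \<noteq> v"
  proof
    assume "u = v"
    then have "v = (1::complex) \<cdot>\<^sub>v u" using u by (intro eq_vecI) auto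
    then show False using indep by blast
  qed
  have "\<not> K.NC.lin_dep {u, v}"
  proof (rule K.NC.finite_lin_indpt2)
    show "{u, v} \<subseteq> carrier_vec n" using u v by auto
    fix a assume "True" and lc0: "K.NC.lincomb a {u, v} = 0\<^sub>v n"
    have eq: "a u * u $ i + a v * v $ i = 0" if i: "i < n" for i
    proof -
      have "K.NC.lincomb a {u, v} $ i = (\<Sum>x\<in>{u,v}. a x * x $ i)"
        by (rule K.NC.lincomb_index[OF i]) (use u v in auto)
      then show ?thesis using lc0 uv i by simp
    qed
    have av: "a v = 0"
    proof (rule ccontr)
      assume "a v \<noteq> 0"
      note avn = this
      have "v = (- a u / a v) \<cdot>\<^sub>v u"
      proof (rule eq_vecI)
        fix i assume "i < dim_vec ((- a u / a v) \<cdot>\<^sub>v u)"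
        then have i: "i < n" using u by simp
        have "a v * v $ i = - (a u * u $ i)" using eq[OF i] by (simp add: eq_neg_iff_add_eq_0 add.commute)
        then have "v $ i = - (a u * u $ i) / a v" using avn by (metis nonzero_mult_div_cancel_left)
        then show "v $ i = ((- a u / a v) \<cdot>\<^sub>v u) $ i" using i u by simp
      qed (use u v in simp)
      then show False using indep by blast
    qed
    have au: "a u = 0"
    proof (rule ccontr)
      assume "a u \<noteq> 0"
      then have "u = 0\<^sub>v n" using eq av u by (intro eq_vecI) simp_all
      then show False using u0 by simp
    qed
    show "\<forall>x\<in>{u,v}. a x = 0" using au av by simp
  qed simp
  then have li: "\<not> K.Ker.lin_dep {u, v}" using K.lindep_same uk vk by auto
  from kernel_basis_exists[OF C] obtain Bs where "finite Bs" "K.Ker.basis Bs" by auto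
  then have fd: "K.Ker.fin_dim" unfolding K.Ker.fin_dim_def K.Ker.basis_def by auto
  have "card {u, v} \<le> K.Ker.dim" by (rule K.Ker.li_le_dim(2)[OF fd _ li]) (use uk vk in auto)
  then have "2 \<le> K.Ker.dim" using uv by simp
  also have "K.Ker.dim = dim_gen_eigenspace M ev 1" unfolding dim_gen_eigenspace_def Cpow by simp
  also have "\<dots> = sum_list (map (min 1) (map fst (filter (\<lambda>(n, e). e = ev) n_as)))"
    by (rule dim_gen_eigenspace[OF jnf])
  also have "\<dots> \<le> sum_list (map fst (filter (\<lambda>(n, e). e = ev) n_as))" by (rule sum_list_min1_le)
  also have "\<dots> = Polynomial.order ev (char_poly M)" 
    unfolding jordan_nf_order[OF jnf] by (induct n_as) auto
  finally show ?thesis .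
qed

lemma order_of_real_map:
  "Polynomial.order (complex_of_real x) (map_poly complex_of_real p) = Polynomial.order x p"
proof -
  interpret h: map_poly_inj_idom_divide_hom complex_of_real by unfold_locales
  show ?thesis by (rule h.order_hom)
qed

lemma eig_unique_real:
  fixes M :: "real mat"
  assumes M: "M \<in> carrier_mat n n" and z: "z \<in> carrier_vec n" and x: "x \<in> carrier_vec n"
    and Mz: "M *\<^sub>v z = ev \<cdot>\<^sub>v z" and Mx: "M *\<^sub>v x = ev \<cdot>\<^sub>v x"
    and z0: "z \<noteq> 0\<^sub>v n" and ord: "Polynomial.order ev (char_poly M) \<le> 1"
  shows "\<exists>c. x = c \<cdot>\<^sub>v z"
proof (rule ccontr)
  assume nd: "\<not> (\<exists>c. x = c \<cdot>\<^sub>v z)"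
  let ?M = "of_real_hom.mat_hom M :: complex mat"
  let ?z = "of_real_hom.vec_hom z :: complex vec"
  let ?x = "of_real_hom.vec_hom x :: complex vec"
  have Mc: "?M \<in> carrier_mat n n" using M by simp
  have zc: "?z \<in> carrier_vec n" using z by simp
  have xc: "?x \<in> carrier_vec n" using x by simp
  have Mzc: "?M *\<^sub>v ?z = complex_of_real ev \<cdot>\<^sub>v ?z"
    unfolding of_real_hom.mult_mat_vec_hom[OF M z, symmetric] Mz using z by (intro eq_vecI) auto
  have Mxc: "?M *\<^sub>v ?x = complex_of_real ev \<cdot>\<^sub>v ?x"
    unfolding of_real_hom.mult_mat_vec_hom[OF M x, symmetric] Mx using x by (intro eq_vecI) auto
  obtain i where i: "i < n" and zi: "z $ i \<noteq> 0"
    using z0 z by (metis carrier_vecD eq_vecI index_zero_vec(1) index_zero_vec(2))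
  have zc0: "?z \<noteq> 0\<^sub>v n"
  proof
    assume "?z = 0\<^sub>v n"
    then have "?z $ i = 0" using i by simp
    then show False using zi i z by simp
  qed
  have indep: "\<forall>a. ?x \<noteq> a \<cdot>\<^sub>v ?z"
  proof (intro allI notI)
    fix a assume eq: "?x = a \<cdot>\<^sub>v ?z"
    have ai: "complex_of_real (x $ i) = a * complex_of_real (z $ i)"
      using arg_cong[OF eq, of "\<lambda>v. v $ i"] i x z by simp
    then have a: "a = complex_of_real (x $ i / z $ i)" using zi by (simp add: field_simps)
    have "x = (x $ i / z $ i) \<cdot>\<^sub>v z"
    proof (rule eq_vecI)
      fix j assume "j < dim_vec ((x $ i / z $ i) \<cdot>\<^sub>v z)"
      then have j: "j < n" using z by simp
      have "complex_of_real (x $ j) = a * complex_of_real (z $ j)"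
        using arg_cong[OF eq, of "\<lambda>v. v $ j"] j x z by simp
      then have "complex_of_real (x $ j) = complex_of_real (x $ i / z $ i * z $ j)" unfolding a by simp
      then show "x $ j = ((x $ i / z $ i) \<cdot>\<^sub>v z) $ j" using j z by (simp only: of_real_eq_iff) simp
    qed (use x z in simp)
    then show False using nd by blast
  qed
  have "2 \<le> Polynomial.order (complex_of_real ev) (char_poly ?M)"
    by (rule two_le_order_complex[OF Mc zc xc Mzc Mxc zc0 indep])
  also have "char_poly ?M = map_poly complex_of_real (char_poly M)"
    by (rule of_real_hom.char_poly_hom[OF M])
  finally show False using ord unfolding order_of_real_map by simp
qed

definition pm :: "nat \<Rightarrow> (nat \<Rightarrow> nat) \<Rightarrow> real mat" where
  "pm m \<sigma> = mat m m (\<lambda>(i,j). if \<sigma> i = j then 1 else 0)"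

lemma pm_carrier[simp]: "pm m \<sigma> \<in> carrier_mat m m"
  unfolding pm_def by simp

lemma pm_dims[simp]: "dim_row (pm m \<sigma>) = m" "dim_col (pm m \<sigma>) = m"
  unfolding pm_def by simp_all

lemma pm_perm_mat: "\<sigma> permutes {..<m} \<Longrightarrow> perm_mat m (pm m \<sigma>)"
  unfolding perm_mat_def pm_def by blast

lemma perm_mat_pm: "perm_mat m P \<Longrightarrow> \<exists>\<sigma>. \<sigma> permutes {..<m} \<and> P = pm m \<sigma>"
  unfolding perm_mat_def pm_def by blast

lemma pm_mult_left:
  assumes s: "\<sigma> permutes {..<m}" and M: "M \<in> carrier_mat m k"
  shows "pm m \<sigma> * M = mat m k (\<lambda>(i,j). M $$ (\<sigma> i, j))"
proof (rule eq_matI)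
  fix i j assume i: "i < dim_row (mat m k (\<lambda>(i,j). M $$ (\<sigma> i, j)))"
    and j: "j < dim_col (mat m k (\<lambda>(i,j). M $$ (\<sigma> i, j)))"
  then have i: "i < m" and j: "j < k" by auto
  have si: "\<sigma> i < m" using permutes_in_image[OF s] i by auto
  have "(pm m \<sigma> * M) $$ (i,j) = (\<Sum>l\<in>{0..<m}. (if \<sigma> i = l then 1 else 0) * M $$ (l, j))"
    using i j M unfolding pm_def by (simp add: scalar_prod_def)
  also have "\<dots> = M $$ (\<sigma> i, j)" using si
    by (simp add: if_distrib[of "\<lambda>t. t * _"] cong: if_cong)
  finally show "(pm m \<sigma> * M) $$ (i,j) = mat m k (\<lambda>(i,j). M $$ (\<sigma> i, j)) $$ (i,j)"
    using i j by simp
qed (use M in auto)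

lemma pm_mult_right:
  assumes s: "\<sigma> permutes {..<m}" and M: "M \<in> carrier_mat k m"
  shows "M * pm m \<sigma> = mat k m (\<lambda>(i,j). M $$ (i, inv_into UNIV \<sigma> j))"
proof (rule eq_matI)
  fix i j assume i: "i < dim_row (mat k m (\<lambda>(i,j). M $$ (i, inv_into UNIV \<sigma> j)))"
    and j: "j < dim_col (mat k m (\<lambda>(i,j). M $$ (i, inv_into UNIV \<sigma> j)))"
  then have i: "i < k" and j: "j < m" by auto
  have si: "inv_into UNIV \<sigma> j < m" using permutes_in_image[OF permutes_inv[OF s]] j by auto
  have "(M * pm m \<sigma>) $$ (i,j) = (\<Sum>l\<in>{0..<m}. M $$ (i, l) * (if \<sigma> l = j then 1 else 0))"
    using i j M unfolding pm_def by (simp add: scalar_prod_def)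
  also have "\<dots> = (\<Sum>l\<in>{0..<m}. M $$ (i, l) * (if inv_into UNIV \<sigma> j = l then 1 else 0))"
    using permutes_inv_eq[OF s] by (intro sum.cong) auto
  also have "\<dots> = M $$ (i, inv_into UNIV \<sigma> j)" using si
    by (simp add: if_distrib[of "\<lambda>t. _ * t"] cong: if_cong)
  finally show "(M * pm m \<sigma>) $$ (i,j) = mat k m (\<lambda>(i,j). M $$ (i, inv_into UNIV \<sigma> j)) $$ (i,j)"
    using i j by simp
qed (use M in auto)

lemma pm_mult_vec:
  assumes s: "\<sigma> permutes {..<m}" and v: "v \<in> carrier_vec m"
  shows "pm m \<sigma> *\<^sub>v v = vec m (\<lambda>i. v $ \<sigma> i)"
proof (rule eq_vecI)
  fix i assume "i < dim_vec (vec m (\<lambda>i. v $ \<sigma> i))"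
  then have i: "i < m" by simp
  have si: "\<sigma> i < m" using permutes_in_image[OF s] i by auto
  have "(pm m \<sigma> *\<^sub>v v) $ i = (\<Sum>l\<in>{0..<m}. (if \<sigma> i = l then 1 else 0) * v $ l)"
    using i v unfolding pm_def by (simp add: scalar_prod_def)
  also have "\<dots> = v $ \<sigma> i" using si
    by (simp add: if_distrib[of "\<lambda>t. t * _"] cong: if_cong)
  finally show "(pm m \<sigma> *\<^sub>v v) $ i = vec m (\<lambda>i. v $ \<sigma> i) $ i" using i by simp
qed (use v in auto)

lemma pm_transpose:
  assumes s: "\<sigma> permutes {..<m}"
  shows "transpose_mat (pm m \<sigma>) = pm m (inv_into UNIV \<sigma>)"
  unfolding pm_def using permutes_inv_eq[OF s] by (intro eq_matI) auto

lemma pm_orth: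
  assumes s: "\<sigma> permutes {..<m}"
  shows "transpose_mat (pm m \<sigma>) * pm m \<sigma> = 1\<^sub>m m"
    and "pm m \<sigma> * transpose_mat (pm m \<sigma>) = 1\<^sub>m m"
proof -
  have si: "inv_into UNIV \<sigma> permutes {..<m}" using permutes_inv[OF s] .
  show "transpose_mat (pm m \<sigma>) * pm m \<sigma> = 1\<^sub>m m"
    unfolding pm_transpose[OF s] pm_mult_left[OF si pm_carrier]
    using permutes_inverses[OF s] permutes_in_image[OF si] by (intro eq_matI) (auto simp: pm_def)
  show "pm m \<sigma> * transpose_mat (pm m \<sigma>) = 1\<^sub>m m"
    unfolding pm_transpose[OF s] pm_mult_left[OF s pm_carrier]
    using permutes_inverses[OF s] permutes_in_image[OF s] by (intro eq_matI) (auto simp: pm_def)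
qed

lemma pm_sandwich:
  assumes r: "\<rho> permutes {..<a}" and p: "\<psi> permutes {..<b}" and Y: "Y \<in> carrier_mat a b"
  shows "pm a \<rho> * Y * pm b (inv_into UNIV \<psi>) = mat a b (\<lambda>(i,j). Y $$ (\<rho> i, \<psi> j))"
proof -
  have pj: "\<And>j. j < b \<Longrightarrow> \<psi> j < b" using permutes_in_image[OF p] by auto
  let ?L = "mat a b (\<lambda>(i,j). Y $$ (\<rho> i, j))"
  have 1: "pm a \<rho> * Y = ?L" by (rule pm_mult_left[OF r Y])
  have 2: "?L * pm b (inv_into UNIV \<psi>) = mat a b (\<lambda>(i,j). ?L $$ (i, inv_into UNIV (inv_into UNIV \<psi>) j))"
    by (rule pm_mult_right[OF permutes_inv[OF p]]) simp
  show ?thesis unfolding 1 2 permutes_inv_inv[OF p]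
    by (intro eq_matI) (simp_all add: pj)
qed

lemma inj_to_permutes:
  fixes f :: "nat \<Rightarrow> nat"
  assumes "\<And>i. i < N \<Longrightarrow> f i < N" and "inj_on f {..<N}" and "\<And>i. i \<ge> N \<Longrightarrow> f i = i"
  shows "f permutes {..<N}"
proof (rule bij_imp_permutes)
  have "f ` {..<N} \<subseteq> {..<N}" using assms(1) by auto
  then have "f ` {..<N} = {..<N}" using Finite_Set.endo_inj_surj[OF finite_lessThan _ assms(2)] by blast
  then show "bij_betw f {..<N} {..<N}" using assms(2) unfolding bij_betw_def by auto
qed (use assms(3) in auto)

lemma restr_permutes:
  fixes \<sigma> :: "nat \<Rightarrow> nat"
  assumes s: "\<sigma> permutes {..<N}" and rng: "\<And>i. i < m \<Longrightarrow> b \<le> \<sigma> (a + i) \<and> \<sigma> (a + i) < b + m"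
  shows "(\<lambda>i. if i < m then \<sigma> (a + i) - b else i) permutes {..<m}"
proof (rule inj_to_permutes)
  show "inj_on (\<lambda>i. if i < m then \<sigma> (a + i) - b else i) {..<m}"
  proof (rule inj_onI)
    fix i j assume i: "i \<in> {..<m}" and j: "j \<in> {..<m}"
      and eq: "(if i < m then \<sigma> (a + i) - b else i) = (if j < m then \<sigma> (a + j) - b else j)"
    have e: "\<sigma> (a + i) - b = \<sigma> (a + j) - b" using eq i j by simp
    have "b \<le> \<sigma> (a + i)" "b \<le> \<sigma> (a + j)" using rng[of i] rng[of j] i j by auto
    then have "\<sigma> (a + i) = \<sigma> (a + j)" using e by arith
    then have "a + i = a + j" using permutes_inj[OF s] unfolding inj_def by blast
    then show "i = j" by simp
  qed
next
  fix i assume i: "i < m"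
  then show "(if i < m then \<sigma> (a + i) - b else i) < m" using rng[OF i] by (simp add: less_diff_conv2)
next
  fix i assume "m \<le> i"
  then show "(if i < m then \<sigma> (a + i) - b else i) = i" by simp
qed



lemma hcat_carrier: "M \<in> carrier_mat a b1 \<Longrightarrow> N \<in> carrier_mat a b2 \<Longrightarrow> hcat M N \<in> carrier_mat a (b1+b2)"
  unfolding hcat_def by auto

lemma hcat_index: "M \<in> carrier_mat a b1 \<Longrightarrow> N \<in> carrier_mat a b2 \<Longrightarrow> i < a \<Longrightarrow> j < b1 + b2 \<Longrightarrow>
  hcat M N $$ (i,j) = (if j < b1 then M $$ (i,j) else N $$ (i, j - b1))"
  unfolding hcat_def by auto

lemma arows_index: "M \<in> carrier_mat a1 b \<Longrightarrow> N \<in> carrier_mat a2 b \<Longrightarrow> i < a1 + a2 \<Longrightarrow> j < b \<Longrightarrow>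
  (M @\<^sub>r N) $$ (i,j) = (if i < a1 then M $$ (i,j) else N $$ (i - a1, j))"
  unfolding append_rows_def by auto

lemma block3_props:
  assumes "M11 \<in> carrier_mat a1 b1" "M12 \<in> carrier_mat a1 b2" "M13 \<in> carrier_mat a1 b3"
    "M21 \<in> carrier_mat a2 b1" "M22 \<in> carrier_mat a2 b2" "M23 \<in> carrier_mat a2 b3"
    "M31 \<in> carrier_mat a3 b1" "M32 \<in> carrier_mat a3 b2" "M33 \<in> carrier_mat a3 b3"
    and i: "i < a1+a2+a3" and j: "j < b1+b2+b3"
  shows "block3 M11 M12 M13 M21 M22 M23 M31 M32 M33 \<in> carrier_mat (a1+a2+a3) (b1+b2+b3)"
    and "block3 M11 M12 M13 M21 M22 M23 M31 M32 M33 $$ (i,j) =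
      (if i < a1 then (if j < b1 then M11 $$ (i,j) else if j < b1+b2 then M12 $$ (i, j-b1) else M13 $$ (i, j-b1-b2))
       else if i < a1+a2 then (if j < b1 then M21 $$ (i-a1,j) else if j < b1+b2 then M22 $$ (i-a1, j-b1) else M23 $$ (i-a1, j-b1-b2))
       else (if j < b1 then M31 $$ (i-a1-a2,j) else if j < b1+b2 then M32 $$ (i-a1-a2, j-b1) else M33 $$ (i-a1-a2, j-b1-b2)))"
proof -
  have r1: "hcat M11 (hcat M12 M13) \<in> carrier_mat a1 (b1+b2+b3)"
    using hcat_carrier[OF assms(1) hcat_carrier[OF assms(2,3)]] by (simp add: add.assoc)
  have r2: "hcat M21 (hcat M22 M23) \<in> carrier_mat a2 (b1+b2+b3)"
    using hcat_carrier[OF assms(4) hcat_carrier[OF assms(5,6)]] by (simp add: add.assoc)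
  have r3: "hcat M31 (hcat M32 M33) \<in> carrier_mat a3 (b1+b2+b3)"
    using hcat_carrier[OF assms(7) hcat_carrier[OF assms(8,9)]] by (simp add: add.assoc)
  have r23: "hcat M21 (hcat M22 M23) @\<^sub>r hcat M31 (hcat M32 M33) \<in> carrier_mat (a2+a3) (b1+b2+b3)"
    using r2 r3 by auto
  show "block3 M11 M12 M13 M21 M22 M23 M31 M32 M33 \<in> carrier_mat (a1+a2+a3) (b1+b2+b3)"
    unfolding block3_def using r1 r23 by (simp add: add.assoc)
  have hh: "\<And>(X::real mat) (Y::real mat) (Z::real mat) a i. X \<in> carrier_mat a b1 \<Longrightarrow> Y \<in> carrier_mat a b2 \<Longrightarrow> Z \<in> carrier_mat a b3 \<Longrightarrow> i < a \<Longrightarrow>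
     hcat X (hcat Y Z) $$ (i,j) = (if j < b1 then X $$ (i,j) else if j < b1+b2 then Y $$ (i, j-b1) else Z $$ (i, j-b1-b2))"
  proof -
    fix X Y Z :: "real mat" and a i assume X: "X \<in> carrier_mat a b1" and Y: "Y \<in> carrier_mat a b2" and Z: "Z \<in> carrier_mat a b3" and i: "i < a"
    have YZ: "hcat Y Z \<in> carrier_mat a (b2+b3)" by (rule hcat_carrier[OF Y Z])
    show "hcat X (hcat Y Z) $$ (i,j) = (if j < b1 then X $$ (i,j) else if j < b1+b2 then Y $$ (i, j-b1) else Z $$ (i, j-b1-b2))"
      using hcat_index[OF X YZ i, of j] hcat_index[OF Y Z i, of "j - b1"] j by (auto simp: add.assoc)
  qed
  show "block3 M11 M12 M13 M21 M22 M23 M31 M32 M33 $$ (i,j) =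
      (if i < a1 then (if j < b1 then M11 $$ (i,j) else if j < b1+b2 then M12 $$ (i, j-b1) else M13 $$ (i, j-b1-b2))
       else if i < a1+a2 then (if j < b1 then M21 $$ (i-a1,j) else if j < b1+b2 then M22 $$ (i-a1, j-b1) else M23 $$ (i-a1, j-b1-b2))
       else (if j < b1 then M31 $$ (i-a1-a2,j) else if j < b1+b2 then M32 $$ (i-a1-a2, j-b1) else M33 $$ (i-a1-a2, j-b1-b2)))"
    unfolding block3_def
    using arows_index[OF r1 r23, of i j] arows_index[OF r2 r3, of "i - a1" j] i j
      hh[OF assms(1-3), of i] hh[OF assms(4-6), of "i - a1"] hh[OF assms(7-9), of "i-a1-a2"]
    by (auto simp: add.assoc)
qed


lemma sum_sign:
  fixes f :: "nat \<Rightarrow> real"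
  assumes "k + k \<le> N"
  shows "(\<Sum>j\<in>{0..<N}. f j * (if j < k then a else if j < k + k then b else 0))
     = a * (\<Sum>j<k. f j) + b * (\<Sum>j<k. f (k + j))"
proof -
  let ?g = "\<lambda>j. f j * (if j < k then a else if j < k + k then b else 0)"
  have s1: "sum ?g {0..<N} = sum ?g {0..<k+k} + sum ?g {k+k..<N}"
    by (rule sum.atLeastLessThan_concat[symmetric]) (use assms in simp_all)
  have s2: "sum ?g {0..<k+k} = sum ?g {0..<k} + sum ?g {k..<k+k}"
    by (rule sum.atLeastLessThan_concat[symmetric]) simp_all
  have "sum ?g {0..<N} = sum ?g {0..<k} + sum ?g {k..<k+k} + sum ?g {k+k..<N}"
    unfolding s1 s2 ..
  also have "sum ?g {0..<k} = a * (\<Sum>j<k. f j)"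
    by (simp add: sum_distrib_left atLeast0LessThan mult.commute)
  also have "sum ?g {k..<k+k} = (\<Sum>j\<in>{k..<k+k}. b * f j)"
    by (intro sum.cong) auto
  also have "\<dots> = (\<Sum>j\<in>{0..<k}. b * f (j + k))"
    using sum.shift_bounds_nat_ivl[of "\<lambda>j. b * f j" 0 k k] by simp
  also have "\<dots> = b * (\<Sum>j<k. f (k + j))"
    by (simp add: sum_distrib_left atLeast0LessThan add.commute)
  also have "sum ?g {k+k..<N} = 0" by (intro sum.neutral) auto
  finally show ?thesis by simp
qed


definition rs :: "(nat \<Rightarrow> nat) \<Rightarrow> nat \<Rightarrow> nat \<Rightarrow> nat \<Rightarrow> nat \<Rightarrow> nat" where
  "rs \<sigma> a b m = (\<lambda>i. if i < m then \<sigma> (a + i) - b else i)"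

lemma rs_apply: "i < m \<Longrightarrow> rs \<sigma> a b m i = \<sigma> (a + i) - b"
  unfolding rs_def by simp

lemma rs_permutes:
  assumes "\<sigma> permutes {..<N}" "\<And>i. i < m \<Longrightarrow> b \<le> \<sigma> (a + i) \<and> \<sigma> (a + i) < b + m"
  shows "rs \<sigma> a b m permutes {..<m}"
  unfolding rs_def by (rule restr_permutes[OF assms])

lemma sand_eq:
  assumes r: "\<rho> permutes {..<a}" and p: "\<psi> permutes {..<b}" and W: "W \<in> carrier_mat a b"
    and Z: "Z \<in> carrier_mat a b" and e: "\<And>i j. i < a \<Longrightarrow> j < b \<Longrightarrow> Z $$ (i,j) = W $$ (\<rho> i, \<psi> j)"
  shows "Z = pm a \<rho> * W * pm b (inv_into UNIV \<psi>)"
  unfolding pm_sandwich[OF r p W] using Z e by (intro eq_matI) auto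

lemma sand_eqD:
  assumes r: "\<rho> permutes {..<a}" and p: "\<psi> permutes {..<b}" and W: "W \<in> carrier_mat a b"
    and e: "Z = pm a \<rho> * W * pm b (inv_into UNIV \<psi>)" and i: "i < a" and j: "j < b"
  shows "Z $$ (i,j) = W $$ (\<rho> i, \<psi> j)"
  unfolding e pm_sandwich[OF r p W] using i j by simp

lemma block_perm_swap:
  fixes f g h :: "nat \<Rightarrow> nat"
  assumes f: "f permutes {..<a}" and g: "g permutes {..<a}" and h: "h permutes {..<m}"
  shows "(\<lambda>i. if i < a then a + f i else if i < a + a then g (i - a)
     else if i < a + a + m then a + a + h (i - a - a) else i) permutes {..<a+a+m}"
proof (rule inj_to_permutes)
  have fl: "\<And>i. i < a \<Longrightarrow> f i < a" using permutes_in_image[OF f] by simp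
  have gl: "\<And>i. i < a \<Longrightarrow> g i < a" using permutes_in_image[OF g] by simp
  have hl: "\<And>i. i < m \<Longrightarrow> h i < m" using permutes_in_image[OF h] by simp
  have fi: "\<And>x y. f x = f y \<Longrightarrow> x = y" using permutes_inj[OF f] unfolding inj_def by blast
  have gi: "\<And>x y. g x = g y \<Longrightarrow> x = y" using permutes_inj[OF g] unfolding inj_def by blast
  have hi: "\<And>x y. h x = h y \<Longrightarrow> x = y" using permutes_inj[OF h] unfolding inj_def by blast
  let ?R = "\<lambda>i. if i < a then a + f i else if i < a + a then g (i - a)
     else if i < a + a + m then a + a + h (i - a - a) else i"
  show "\<And>i. i < a + a + m \<Longrightarrow> ?R i < a + a + m"
  proof -
    fix i assume i: "i < a + a + m"
    show "?R i < a + a + m"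
    proof (cases "i < a")
      case True then show ?thesis using fl[OF True] by simp
    next
      case False
      show ?thesis
      proof (cases "i < a + a")
        case True then have ia: "i - a < a" by simp
        show ?thesis using gl[OF ia] False True by simp
      next
        case False2: False then have ia: "i - a - a < m" using i by simp
        show ?thesis using hl[OF ia] False False2 i by simp
      qed
    qed
  qed
  show "inj_on (\<lambda>i. if i < a then a + f i else if i < a + a then g (i - a)
     else if i < a + a + m then a + a + h (i - a - a) else i) {..<a+a+m}"
  proof (rule inj_onI)
    fix x y assume x: "x \<in> {..<a+a+m}" and y: "y \<in> {..<a+a+m}"
      and e: "(if x < a then a + f x else if x < a + a then g (x - a)
     else if x < a + a + m then a + a + h (x - a - a) else x) = (if y < a then a + f y else if y < a + a then g (y - a)
     else if y < a + a + m then a + a + h (y - a - a) else y)"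
    show "x = y"
    proof -
      have lx: "x - a < a" if "x < a + a" using that by simp
      have ly: "y - a < a" if "y < a + a" using that by simp
      show ?thesis using e x y fl[of x] fl[of y] gl[OF lx] gl[OF ly] fi[of x y] gi[of "x - a" "y - a"] hi[of "x-a-a" "y-a-a"]
        by (auto split: if_splits)
    qed
  qed
qed simp

lemma block_perm_id:
  fixes f g h :: "nat \<Rightarrow> nat"
  assumes f: "f permutes {..<a}" and g: "g permutes {..<a}" and h: "h permutes {..<m}"
  shows "(\<lambda>i. if i < a then f i else if i < a + a then a + g (i - a)
     else if i < a + a + m then a + a + h (i - a - a) else i) permutes {..<a+a+m}"
proof (rule inj_to_permutes)
  have fl: "\<And>i. i < a \<Longrightarrow> f i < a" using permutes_in_image[OF f] by simp
  have gl: "\<And>i. i < a \<Longrightarrow> g i < a" using permutes_in_image[OF g] by simp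
  have hl: "\<And>i. i < m \<Longrightarrow> h i < m" using permutes_in_image[OF h] by simp
  have fi: "\<And>x y. f x = f y \<Longrightarrow> x = y" using permutes_inj[OF f] unfolding inj_def by blast
  have gi: "\<And>x y. g x = g y \<Longrightarrow> x = y" using permutes_inj[OF g] unfolding inj_def by blast
  have hi: "\<And>x y. h x = h y \<Longrightarrow> x = y" using permutes_inj[OF h] unfolding inj_def by blast
  let ?R = "\<lambda>i. if i < a then f i else if i < a + a then a + g (i - a)
     else if i < a + a + m then a + a + h (i - a - a) else i"
  show "\<And>i. i < a + a + m \<Longrightarrow> ?R i < a + a + m"
  proof -
    fix i assume i: "i < a + a + m"
    show "?R i < a + a + m"
    proof (cases "i < a")
      case True then show ?thesis using fl[OF True] by simp
    next
      case False
      show ?thesis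
      proof (cases "i < a + a")
        case True then have ia: "i - a < a" by simp
        show ?thesis using gl[OF ia] False True by simp
      next
        case False2: False then have ia: "i - a - a < m" using i by simp
        show ?thesis using hl[OF ia] False False2 i by simp
      qed
    qed
  qed
  show "inj_on (\<lambda>i. if i < a then f i else if i < a + a then a + g (i - a)
     else if i < a + a + m then a + a + h (i - a - a) else i) {..<a+a+m}"
  proof (rule inj_onI)
    fix x y assume x: "x \<in> {..<a+a+m}" and y: "y \<in> {..<a+a+m}"
      and e: "(if x < a then f x else if x < a + a then a + g (x - a)
     else if x < a + a + m then a + a + h (x - a - a) else x) = (if y < a then f y else if y < a + a then a + g (y - a)
     else if y < a + a + m then a + a + h (y - a - a) else y)"
    show "x = y"
    proof -
      have lx: "x - a < a" if "x < a + a" using that by simp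
      have ly: "y - a < a" if "y < a + a" using that by simp
      show ?thesis using e x y fl[of x] fl[of y] gl[OF lx] gl[OF ly] fi[of x y] gi[of "x - a" "y - a"] hi[of "x-a-a" "y-a-a"]
        by (auto split: if_splits)
    qed
  qed
qed simp


lemma reg3:
  fixes i a m :: nat
  assumes "i < a + a + m" and "i < a \<Longrightarrow> P" and "\<And>i'. i = a + i' \<Longrightarrow> i' < a \<Longrightarrow> P"
    and "\<And>i'. i = a + a + i' \<Longrightarrow> i' < m \<Longrightarrow> P"
  shows P
proof (cases "i < a")
  case True then show ?thesis using assms(2) by simp
next
  case False
  show ?thesis
  proof (cases "i < a + a")
    case True then show ?thesis using assms(3)[of "i - a"] False by simp
  next
    case False2: False then show ?thesis using assms(4)[of "i - a - a"] assms(1) by simp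
  qed
qed

locale gm_setting =
  fixes n k1 k2 r c :: nat
    and X1 X2 X3 X4 Y A B :: "real mat"
  assumes k1: "k1 > 0" and k2: "k2 > 0"
    and n1: "n = 2 * k1 + r" and n2: "n = 2 * k2 + c"
    and zX1: "zo_mat k1 c X1" and zX2: "zo_mat k1 c X2"
    and zX3: "zo_mat r k2 X3" and zX4: "zo_mat r k2 X4"
    and zY: "zo_mat r c Y"
    and col12: "transpose_mat X1 *\<^sub>v ones_vec k1 = transpose_mat X2 *\<^sub>v ones_vec k1"
    and row34: "X3 *\<^sub>v ones_vec k2 = X4 *\<^sub>v ones_vec k2"
    and Adef: "A = block3 (0\<^sub>m k1 k2) (ones_mat k1 k2) X1
                    (ones_mat k1 k2) (0\<^sub>m k1 k2) X2
                    X3 X4 Y"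
    and Bdef: "B = block3 (ones_mat k1 k2) (0\<^sub>m k1 k2) X1
                    (0\<^sub>m k1 k2) (ones_mat k1 k2) X2
                    X3 X4 Y"
    and gram: "gram_mates A B"
    and dsv: "distinct_singular_values A"
    and rk: "vec_space.rank n (A - B) = 1"
begin

lemma X1c: "X1 \<in> carrier_mat k1 c" using zX1 unfolding zo_mat_def by auto
lemma X2c: "X2 \<in> carrier_mat k1 c" using zX2 unfolding zo_mat_def by auto
lemma X3c: "X3 \<in> carrier_mat r k2" using zX3 unfolding zo_mat_def by auto
lemma X4c: "X4 \<in> carrier_mat r k2" using zX4 unfolding zo_mat_def by auto
lemma Yc: "Y \<in> carrier_mat r c" using zY unfolding zo_mat_def by auto
lemma Jc: "ones_mat k1 k2 \<in> carrier_mat k1 k2" unfolding ones_mat_def by simp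
lemma Zc: "0\<^sub>m k1 k2 \<in> carrier_mat k1 k2" by simp

lemma nk1: "n = k1 + k1 + r" using n1 by simp
lemma nk2: "n = k2 + k2 + c" using n2 by simp

lemma Ac: "A \<in> carrier_mat n n"
  using block3_props(1)[OF Zc Jc X1c Jc Zc X2c X3c X4c Yc, of 0 0] k1 k2
  unfolding Adef nk1[symmetric] nk2[symmetric] by (simp add: nk1 nk2)

lemma Bc: "B \<in> carrier_mat n n"
  using block3_props(1)[OF Jc Zc X1c Zc Jc X2c X3c X4c Yc, of 0 0] k1 k2
  unfolding Bdef nk1[symmetric] nk2[symmetric] by (simp add: nk1 nk2)

lemma hA: assumes i: "i < n" and j: "j < n"
  shows "A $$ (i,j) = (if i < k1 then (if j < k2 then 0 else if j < k2+k2 then 1 else X1 $$ (i, j-k2-k2))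
       else if i < k1+k1 then (if j < k2 then 1 else if j < k2+k2 then 0 else X2 $$ (i-k1, j-k2-k2))
       else (if j < k2 then X3 $$ (i-k1-k1,j) else if j < k2+k2 then X4 $$ (i-k1-k1, j-k2) else Y $$ (i-k1-k1, j-k2-k2)))"
  using block3_props(2)[OF Zc Jc X1c Jc Zc X2c X3c X4c Yc, of i j] i j
  unfolding Adef by (auto simp: nk1[symmetric] nk2[symmetric] ones_mat_def)

lemma hB: assumes i: "i < n" and j: "j < n"
  shows "B $$ (i,j) = (if i < k1 then (if j < k2 then 1 else if j < k2+k2 then 0 else X1 $$ (i, j-k2-k2))
       else if i < k1+k1 then (if j < k2 then 0 else if j < k2+k2 then 1 else X2 $$ (i-k1, j-k2-k2))
       else (if j < k2 then X3 $$ (i-k1-k1,j) else if j < k2+k2 then X4 $$ (i-k1-k1, j-k2) else Y $$ (i-k1-k1, j-k2-k2)))"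
  using block3_props(2)[OF Jc Zc X1c Zc Jc X2c X3c X4c Yc, of i j] i j
  unfolding Bdef by (auto simp: nk1[symmetric] nk2[symmetric] ones_mat_def)

lemma rowsum34: assumes "i < r" shows "(\<Sum>j<k2. X3 $$ (i,j)) = (\<Sum>j<k2. X4 $$ (i,j))"
proof -
  have "(X3 *\<^sub>v ones_vec k2) $ i = (X4 *\<^sub>v ones_vec k2) $ i" using row34 by simp
  then show ?thesis using assms X3c X4c
    by (simp add: ones_vec_def scalar_prod_def atLeast0LessThan)
qed

lemma colsum12: assumes "j < c" shows "(\<Sum>i<k1. X1 $$ (i,j)) = (\<Sum>i<k1. X2 $$ (i,j))"
proof -
  have "(transpose_mat X1 *\<^sub>v ones_vec k1) $ j = (transpose_mat X2 *\<^sub>v ones_vec k1) $ j" using col12 by simp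
  then show ?thesis using assms X1c X2c
    by (simp add: ones_vec_def scalar_prod_def atLeast0LessThan)
qed

definition zv :: "real vec" where
  "zv = vec n (\<lambda>j. if j < k2 then 1 else if j < k2 + k2 then -1 else 0)"
definition wv :: "real vec" where
  "wv = vec n (\<lambda>i. if i < k1 then -1 else if i < k1 + k1 then 1 else 0)"

lemma Az: "A *\<^sub>v zv = real k2 \<cdot>\<^sub>v wv"
proof (rule eq_vecI)
  fix i assume "i < dim_vec (real k2 \<cdot>\<^sub>v wv)"
  then have i: "i < n" by (simp add: wv_def)
  have "(A *\<^sub>v zv) $ i = (\<Sum>j\<in>{0..<n}. A $$ (i,j) * (if j < k2 then 1 else if j < k2 + k2 then -1 else 0))"
    using i Ac by (simp add: zv_def scalar_prod_def)
  also have "\<dots> = (\<Sum>j<k2. A $$ (i,j)) - (\<Sum>j<k2. A $$ (i, k2 + j))"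
    using sum_sign[of k2 n "\<lambda>j. A $$ (i,j)" 1 "-1"] nk2 by simp
  also have "\<dots> = real k2 * wv $ i"
  proof -
    have hj: "\<And>j. j < k2 \<Longrightarrow> j < n" "\<And>j. j < k2 \<Longrightarrow> k2 + j < n" using nk2 by auto
    show ?thesis
    proof (cases "i < k1")
      case True
      then show ?thesis using i hj by (simp add: hA wv_def)
    next
      case False
      show ?thesis
      proof (cases "i < k1 + k1")
        case True
        then show ?thesis using False i hj by (simp add: hA wv_def)
      next
        case False2: False
        have "(\<Sum>j<k2. A $$ (i,j)) = (\<Sum>j<k2. X3 $$ (i-k1-k1,j))"
          using False False2 i hj by (intro sum.cong) (auto simp: hA)
        moreover have "(\<Sum>j<k2. A $$ (i,k2+j)) = (\<Sum>j<k2. X4 $$ (i-k1-k1,j))"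
          using False False2 i hj by (intro sum.cong) (auto simp: hA)
        moreover have "i - k1 - k1 < r" using i False2 nk1 by simp
        ultimately show ?thesis using rowsum34 False False2 i by (simp add: wv_def)
      qed
    qed
  qed
  finally show "(A *\<^sub>v zv) $ i = (real k2 \<cdot>\<^sub>v wv) $ i" using i by (simp add: wv_def)
qed (use Ac in \<open>simp add: zv_def wv_def\<close>)


lemma Bz: "B *\<^sub>v zv = (- real k2) \<cdot>\<^sub>v wv"
proof (rule eq_vecI)
  fix i assume "i < dim_vec ((- real k2) \<cdot>\<^sub>v wv)"
  then have i: "i < n" by (simp add: wv_def)
  have "(B *\<^sub>v zv) $ i = (\<Sum>j\<in>{0..<n}. B $$ (i,j) * (if j < k2 then 1 else if j < k2 + k2 then -1 else 0))"
    using i Bc by (simp add: zv_def scalar_prod_def)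
  also have "\<dots> = (\<Sum>j<k2. B $$ (i,j)) - (\<Sum>j<k2. B $$ (i, k2 + j))"
    using sum_sign[of k2 n "\<lambda>j. B $$ (i,j)" 1 "-1"] nk2 by simp
  also have "\<dots> = (- real k2) * wv $ i"
  proof -
    have hj: "\<And>j. j < k2 \<Longrightarrow> j < n" "\<And>j. j < k2 \<Longrightarrow> k2 + j < n" using nk2 by auto
    show ?thesis
    proof (cases "i < k1")
      case True
      then show ?thesis using i hj by (simp add: hB wv_def)
    next
      case False
      show ?thesis
      proof (cases "i < k1 + k1")
        case True
        then show ?thesis using False i hj by (simp add: hB wv_def)
      next
        case False2: False
        have "(\<Sum>j<k2. B $$ (i,j)) = (\<Sum>j<k2. X3 $$ (i-k1-k1,j))"
          using False False2 i hj by (intro sum.cong) (auto simp: hB)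
        moreover have "(\<Sum>j<k2. B $$ (i,k2+j)) = (\<Sum>j<k2. X4 $$ (i-k1-k1,j))"
          using False False2 i hj by (intro sum.cong) (auto simp: hB)
        moreover have "i - k1 - k1 < r" using i False2 nk1 by simp
        ultimately show ?thesis using rowsum34 False False2 i by (simp add: wv_def)
      qed
    qed
  qed
  finally show "(B *\<^sub>v zv) $ i = ((- real k2) \<cdot>\<^sub>v wv) $ i" using i by (simp add: wv_def)
qed (use Bc in \<open>simp add: zv_def wv_def\<close>)

lemma Atw: "transpose_mat A *\<^sub>v wv = real k1 \<cdot>\<^sub>v zv"
proof (rule eq_vecI)
  fix j assume "j < dim_vec (real k1 \<cdot>\<^sub>v zv)"
  then have j: "j < n" by (simp add: zv_def)
  have "(transpose_mat A *\<^sub>v wv) $ j = (\<Sum>i\<in>{0..<n}. A $$ (i,j) * (if i < k1 then -1 else if i < k1 + k1 then 1 else 0))"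
    using j Ac by (simp add: wv_def scalar_prod_def)
  also have "\<dots> = - (\<Sum>i<k1. A $$ (i,j)) + (\<Sum>i<k1. A $$ (k1 + i, j))"
    using sum_sign[of k1 n "\<lambda>i. A $$ (i,j)" "-1" 1] nk1 by simp
  also have "\<dots> = real k1 * zv $ j"
  proof -
    have hi: "\<And>i. i < k1 \<Longrightarrow> i < n" "\<And>i. i < k1 \<Longrightarrow> k1 + i < n" using nk1 by auto
    show ?thesis
    proof (cases "j < k2")
      case True
      then show ?thesis using j hi by (simp add: hA zv_def)
    next
      case False
      show ?thesis
      proof (cases "j < k2 + k2")
        case True
        then show ?thesis using False j hi by (simp add: hA zv_def)
      next
        case False2: False
        have "(\<Sum>i<k1. A $$ (i,j)) = (\<Sum>i<k1. X1 $$ (i,j-k2-k2))"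
          using False False2 j hi by (intro sum.cong) (auto simp: hA)
        moreover have "(\<Sum>i<k1. A $$ (k1+i,j)) = (\<Sum>i<k1. X2 $$ (i,j-k2-k2))"
          using False False2 j hi by (intro sum.cong) (auto simp: hA)
        moreover have "j - k2 - k2 < c" using j False2 nk2 by simp
        ultimately show ?thesis using colsum12 False False2 j by (simp add: zv_def)
      qed
    qed
  qed
  finally show "(transpose_mat A *\<^sub>v wv) $ j = (real k1 \<cdot>\<^sub>v zv) $ j" using j by (simp add: zv_def)
qed (use Ac in \<open>simp add: zv_def wv_def\<close>)

lemma zv_c: "zv \<in> carrier_vec n" unfolding zv_def by simp
lemma wv_c: "wv \<in> carrier_vec n" unfolding wv_def by simp

lemma Mz: "(transpose_mat A * A) *\<^sub>v zv = (real k1 * real k2) \<cdot>\<^sub>v zv"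
proof -
  have "(transpose_mat A * A) *\<^sub>v zv = transpose_mat A *\<^sub>v (A *\<^sub>v zv)"
    using Ac zv_c by (simp add: assoc_mult_mat_vec)
  also have "\<dots> = real k2 \<cdot>\<^sub>v (transpose_mat A *\<^sub>v wv)"
    unfolding Az using Ac wv_c by (simp add: mult_mat_vec)
  also have "\<dots> = (real k1 * real k2) \<cdot>\<^sub>v zv" unfolding Atw
    by (simp add: smult_smult_assoc mult.commute)
  finally show ?thesis .
qed


lemma zv0: "zv \<noteq> 0\<^sub>v n"
proof
  assume z: "zv = 0\<^sub>v n"
  have n0: "0 < n" using k2 nk2 by simp
  have "zv $ 0 = 0" unfolding z using n0 by simp
  moreover have "zv $ 0 = 1" using n0 k2 by (simp add: zv_def)
  ultimately show False by simp
qed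

lemma sum_perm_n:
  fixes g :: "nat \<Rightarrow> real"
  assumes "p permutes {..<n}"
  shows "(\<Sum>j\<in>{0..<n}. g (p j)) = (\<Sum>j\<in>{0..<n}. g j)"
  using sum.permute[OF assms, of g] by (simp add: atLeast0LessThan comp_def)

lemma key_sym:
  assumes pi: "\<pi> permutes {..<n}" and ph: "\<phi> permutes {..<n}"
    and hBA: "\<And>i j. i < n \<Longrightarrow> j < n \<Longrightarrow> B $$ (i,j) = A $$ (\<pi> i, \<phi> j)"
  shows "\<exists>c::real. (c = 1 \<or> c = -1) \<and> (\<forall>j<n. zv $ \<phi> j = c * zv $ j) \<and> (\<forall>i<n. wv $ \<pi> i = - c * wv $ i)"
proof -
  define M where "M = transpose_mat A * A"
  let ?M = M
  have Mc: "?M \<in> carrier_mat n n" using Ac unfolding M_def by simp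
  have Mz': "M *\<^sub>v zv = (real k1 * real k2) \<cdot>\<^sub>v zv" unfolding M_def by (rule Mz)
  have pin: "\<And>i. i < n \<Longrightarrow> \<pi> i < n" using permutes_in_image[OF pi] by simp
  have phn: "\<And>i. i < n \<Longrightarrow> \<phi> i < n" using permutes_in_image[OF ph] by simp
  have Mij: "\<And>i j. i < n \<Longrightarrow> j < n \<Longrightarrow> ?M $$ (i,j) = (\<Sum>k\<in>{0..<n}. A $$ (k,i) * A $$ (k,j))"
    using Ac unfolding M_def by (simp add: scalar_prod_def)
  have gr: "?M = transpose_mat B * B" using gram unfolding gram_mates_def M_def by simp
  have MB: "?M $$ (i,j) = ?M $$ (\<phi> i, \<phi> j)" if i: "i < n" and j: "j < n" for i j
  proof -
    have "?M $$ (i,j) = (transpose_mat B * B) $$ (i,j)" using gr by simp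
    also have "\<dots> = (\<Sum>k\<in>{0..<n}. B $$ (k,i) * B $$ (k,j))"
      using Bc i j by (simp add: scalar_prod_def)
    also have "\<dots> = (\<Sum>k\<in>{0..<n}. A $$ (\<pi> k, \<phi> i) * A $$ (\<pi> k, \<phi> j))"
      using i j by (intro sum.cong) (auto simp: hBA)
    also have "\<dots> = (\<Sum>k\<in>{0..<n}. A $$ (k, \<phi> i) * A $$ (k, \<phi> j))"
      by (rule sum_perm_n[OF pi, of "\<lambda>k. A $$ (k, \<phi> i) * A $$ (k, \<phi> j)"])
    also have "\<dots> = ?M $$ (\<phi> i, \<phi> j)" using Mij[OF phn[OF i] phn[OF j]] by simp
    finally show ?thesis .
  qed
  define \<sigma> where "\<sigma> = inv_into UNIV \<phi>"
  have si: "\<sigma> permutes {..<n}" unfolding \<sigma>_def by (rule permutes_inv[OF ph])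
  have sin: "\<And>i. i < n \<Longrightarrow> \<sigma> i < n" using permutes_in_image[OF si] by simp
  have phs: "\<And>i. \<phi> (\<sigma> i) = i" unfolding \<sigma>_def using permutes_inverses[OF ph] by simp
  have sph: "\<And>i. \<sigma> (\<phi> i) = i" unfolding \<sigma>_def using permutes_inverses[OF ph] by simp
  define y where "y = vec n (\<lambda>i. zv $ \<sigma> i)"
  have yc: "y \<in> carrier_vec n" unfolding y_def by simp
  have My: "?M *\<^sub>v y = (real k1 * real k2) \<cdot>\<^sub>v y"
  proof (rule eq_vecI)
    fix i assume "i < dim_vec ((real k1 * real k2) \<cdot>\<^sub>v y)"
    then have i: "i < n" by (simp add: y_def)
    have "(?M *\<^sub>v y) $ i = (\<Sum>j\<in>{0..<n}. ?M $$ (i,j) * zv $ \<sigma> j)"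
      using i Mc by (simp add: y_def scalar_prod_def)
    also have "\<dots> = (\<Sum>j\<in>{0..<n}. ?M $$ (\<sigma> i, \<sigma> j) * zv $ \<sigma> j)"
      using i MB[OF sin[OF i] sin] by (intro sum.cong) (auto simp: phs)
    also have "\<dots> = (\<Sum>j\<in>{0..<n}. ?M $$ (\<sigma> i, j) * zv $ j)"
      by (rule sum_perm_n[OF si, of "\<lambda>j. ?M $$ (\<sigma> i, j) * zv $ j"])
    also have "\<dots> = (?M *\<^sub>v zv) $ \<sigma> i"
      using sin[OF i] Mc by (simp add: zv_def scalar_prod_def)
    also have "\<dots> = (real k1 * real k2) * zv $ \<sigma> i"
      unfolding Mz' using sin[OF i] by (simp add: zv_def)
    finally show "(?M *\<^sub>v y) $ i = ((real k1 * real k2) \<cdot>\<^sub>v y) $ i" using i by (simp add: y_def)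
  qed (use Mc in \<open>simp add: y_def\<close>)
  have ord: "Polynomial.order (real k1 * real k2) (char_poly ?M) \<le> 1"
  proof -
    let ?s = "sqrt (real k1 * real k2)"
    have "sv_mult A ?s \<le> 1" using dsv unfolding distinct_singular_values_def by simp
    moreover have "?s ^ 2 = real k1 * real k2" by simp
    ultimately show ?thesis unfolding sv_mult_def M_def by simp
  qed
  obtain c where yz: "y = c \<cdot>\<^sub>v zv"
    using eig_unique_real[OF Mc zv_c yc Mz' My zv0 ord] by blast
  have zs: "\<And>i. i < n \<Longrightarrow> zv $ \<sigma> i = c * zv $ i"
  proof -
    fix i assume i: "i < n"
    have "y $ i = (c \<cdot>\<^sub>v zv) $ i" using yz by simp
    then show "zv $ \<sigma> i = c * zv $ i" using i by (simp add: y_def zv_def)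
  qed
  have zphi: "\<And>j. j < n \<Longrightarrow> zv $ j = c * zv $ \<phi> j" using zs[OF phn] sph by metis
  have n0: "0 < n" using nk2 k2 by simp
  have z00: "zv $ 0 = 1" using n0 k2 by (simp add: zv_def)
  have "zv $ \<phi> 0 = 1 \<or> zv $ \<phi> 0 = -1 \<or> zv $ \<phi> 0 = 0" using phn[OF n0] by (simp add: zv_def)
  then have c1: "c = 1 \<or> c = -1" using zphi[OF n0] z00 by auto
  have cc: "c * c = 1" using c1 by auto
  have zf: "\<forall>j<n. zv $ \<phi> j = c * zv $ j"
  proof (intro allI impI)
    fix j assume j: "j < n"
    have "c * zv $ j = c * c * zv $ \<phi> j" using zphi[OF j] by simp
    then show "zv $ \<phi> j = c * zv $ j" using cc by simp
  qed
  have wf: "\<forall>i<n. wv $ \<pi> i = - c * wv $ i"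
  proof (intro allI impI)
    fix i assume i: "i < n"
    have "(B *\<^sub>v zv) $ i = (\<Sum>j\<in>{0..<n}. B $$ (i,j) * zv $ j)"
      using i Bc by (simp add: zv_def scalar_prod_def)
    also have "\<dots> = (\<Sum>j\<in>{0..<n}. c * (A $$ (\<pi> i, \<phi> j) * zv $ \<phi> j))"
      using i zphi by (intro sum.cong) (auto simp: hBA)
    also have "\<dots> = c * (\<Sum>j\<in>{0..<n}. A $$ (\<pi> i, \<phi> j) * zv $ \<phi> j)"
      by (simp add: sum_distrib_left)
    also have "(\<Sum>j\<in>{0..<n}. A $$ (\<pi> i, \<phi> j) * zv $ \<phi> j) = (\<Sum>j\<in>{0..<n}. A $$ (\<pi> i, j) * zv $ j)"
      by (rule sum_perm_n[OF ph, of "\<lambda>j. A $$ (\<pi> i, j) * zv $ j"])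
    also have "\<dots> = (A *\<^sub>v zv) $ \<pi> i"
      using pin[OF i] Ac by (simp add: zv_def scalar_prod_def)
    also have "\<dots> = real k2 * wv $ \<pi> i" unfolding Az using pin[OF i] by (simp add: wv_def)
    finally have "(B *\<^sub>v zv) $ i = c * (real k2 * wv $ \<pi> i)" .
    moreover have "(B *\<^sub>v zv) $ i = - real k2 * wv $ i" unfolding Bz using i by (simp add: wv_def)
    ultimately have "c * (real k2 * wv $ \<pi> i) = - real k2 * wv $ i" by simp
    then have X: "real k2 * (c * wv $ \<pi> i) = real k2 * (- wv $ i)" by (simp add: mult.left_commute)
    have k2n: "real k2 \<noteq> 0" using k2 by simp
    have "c * wv $ \<pi> i = - wv $ i" using iffD1[OF mult_left_cancel[OF k2n] X] .
    then have "c * (c * wv $ \<pi> i) = c * (- wv $ i)" by simp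
    then show "wv $ \<pi> i = - c * wv $ i" using cc by (simp add: mult.assoc[symmetric])
  qed
  show ?thesis using c1 zf wf by blast
qed


lemma fwd:
  assumes iso: "isomorphic n n A B"
  shows "fixable k1 k2 r c X1 X2 X3 X4 Y"
proof -
  obtain P Q where P: "perm_mat n P" and Q: "perm_mat n Q" and BPAQ: "B = P * A * Q"
    using iso unfolding isomorphic_def by blast
  obtain \<pi> where pi: "\<pi> permutes {..<n}" and Pp: "P = pm n \<pi>" using perm_mat_pm[OF P] by blast
  obtain \<sigma> where si: "\<sigma> permutes {..<n}" and Qs: "Q = pm n \<sigma>" using perm_mat_pm[OF Q] by blast
  define \<phi> where "\<phi> = inv_into UNIV \<sigma>"
  have ph: "\<phi> permutes {..<n}" unfolding \<phi>_def by (rule permutes_inv[OF si])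
  have Qp: "Q = pm n (inv_into UNIV \<phi>)" unfolding Qs \<phi>_def permutes_inv_inv[OF si] ..
  have hBA: "\<And>i j. i < n \<Longrightarrow> j < n \<Longrightarrow> B $$ (i,j) = A $$ (\<pi> i, \<phi> j)"
    using sand_eqD[OF pi ph Ac] BPAQ unfolding Pp Qp by blast
  have pin: "\<And>i. i < n \<Longrightarrow> \<pi> i < n" using permutes_in_image[OF pi] by simp
  have phn: "\<And>i. i < n \<Longrightarrow> \<phi> i < n" using permutes_in_image[OF ph] by simp
  obtain cc :: real where c1: "cc = 1 \<or> cc = -1" and zf: "\<forall>j<n. zv $ \<phi> j = cc * zv $ j"
    and wf: "\<forall>i<n. wv $ \<pi> i = - cc * wv $ i"
    using key_sym[OF pi ph hBA] by blast
  have zj: "\<And>j. j < n \<Longrightarrow> zv $ j = (if j < k2 then 1 else if j < k2 + k2 then -1 else 0)"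
    unfolding zv_def by simp
  have wi: "\<And>i. i < n \<Longrightarrow> wv $ i = (if i < k1 then -1 else if i < k1 + k1 then 1 else 0)"
    unfolding wv_def by simp
  have ph3: "k2 + k2 \<le> \<phi> j" if "k2 + k2 \<le> j" "j < n" for j
    using zf[rule_format, of j] zj[of j] zj[of "\<phi> j"] phn[of j] that c1
    by (auto split: if_splits)
  have pi3: "k1 + k1 \<le> \<pi> i" if "k1 + k1 \<le> i" "i < n" for i
    using wf[rule_format, of i] wi[of i] wi[of "\<pi> i"] pin[of i] that c1
    by (auto split: if_splits)
  define \<rho> where "\<rho> = rs \<pi> (k1+k1) (k1+k1) r"
  define \<psi> where "\<psi> = rs \<phi> (k2+k2) (k2+k2) c"
  have rho: "\<rho> permutes {..<r}" unfolding \<rho>_def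
    by (rule rs_permutes[OF pi]) (use pi3 pin nk1 in force)
  have psi: "\<psi> permutes {..<c}" unfolding \<psi>_def
    by (rule rs_permutes[OF ph]) (use ph3 phn nk2 in force)
  have Yeq: "Y = pm r \<rho> * Y * pm c (inv_into UNIV \<psi>)"
  proof (rule sand_eq[OF rho psi Yc Yc])
    fix i j assume i: "i < r" and j: "j < c"
    have i': "k1 + k1 + i < n" and j': "k2 + k2 + j < n" using i j nk1 nk2 by auto
    have "Y $$ (i,j) = B $$ (k1+k1+i, k2+k2+j)" using i' j' by (simp add: hB)
    also have "\<dots> = A $$ (\<pi> (k1+k1+i), \<phi> (k2+k2+j))" using i' j' by (rule hBA)
    also have "\<dots> = Y $$ (\<rho> i, \<psi> j)"
      using pi3[of "k1+k1+i"] ph3[of "k2+k2+j"] pin[OF i'] phn[OF j'] i j i' j'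
      by (simp add: hA \<rho>_def \<psi>_def rs_apply)
    finally show "Y $$ (i,j) = Y $$ (\<rho> i, \<psi> j)" .
  qed
  have Pr: "perm_mat r (pm r \<rho>)" by (rule pm_perm_mat[OF rho])
  have Qc: "perm_mat c (pm c (inv_into UNIV \<psi>))" by (rule pm_perm_mat[OF permutes_inv[OF psi]])
  have bnd: "\<And>i. i < k1 \<Longrightarrow> i < n" "\<And>i. i < k1 \<Longrightarrow> k1 + i < n" "\<And>i. i < r \<Longrightarrow> k1 + k1 + i < n"
    "\<And>j. j < k2 \<Longrightarrow> j < n" "\<And>j. j < k2 \<Longrightarrow> k2 + j < n" "\<And>j. j < c \<Longrightarrow> k2 + k2 + j < n"
    using nk1 nk2 by auto
  from c1 show ?thesis
  proof
    assume c: "cc = 1"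
    have ph1: "\<phi> j < k2" if "j < k2" for j
      using zf[rule_format, of j] zj[of j] zj[of "\<phi> j"] phn[of j] that c bnd(4)[OF that]
      by (auto split: if_splits)
    have ph2: "k2 \<le> \<phi> (k2 + j) \<and> \<phi> (k2 + j) < k2 + k2" if "j < k2" for j
      using zf[rule_format, of "k2+j"] zj[of "k2+j"] zj[of "\<phi> (k2+j)"] phn[of "k2+j"] that c bnd(5)[OF that]
      by (auto split: if_splits)
    have pi1: "k1 \<le> \<pi> i \<and> \<pi> i < k1 + k1" if "i < k1" for i
      using wf[rule_format, of i] wi[of i] wi[of "\<pi> i"] pin[of i] that c bnd(1)[OF that]
      by (auto split: if_splits)
    have pi2: "\<pi> (k1 + i) < k1" if "i < k1" for i
      using wf[rule_format, of "k1+i"] wi[of "k1+i"] wi[of "\<pi> (k1+i)"] pin[of "k1+i"] that c bnd(2)[OF that]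
      by (auto split: if_splits)
    define \<alpha> where "\<alpha> = rs \<pi> k1 0 k1"
    define \<beta> where "\<beta> = rs \<pi> 0 k1 k1"
    define \<gamma> where "\<gamma> = rs \<phi> 0 0 k2"
    define \<delta> where "\<delta> = rs \<phi> k2 k2 k2"
    have al: "\<alpha> permutes {..<k1}" unfolding \<alpha>_def by (rule rs_permutes[OF pi]) (use pi2 in simp)
    have be: "\<beta> permutes {..<k1}" unfolding \<beta>_def by (rule rs_permutes[OF pi]) (use pi1 in simp)
    have ga: "\<gamma> permutes {..<k2}" unfolding \<gamma>_def by (rule rs_permutes[OF ph]) (use ph1 in simp)
    have de: "\<delta> permutes {..<k2}" unfolding \<delta>_def by (rule rs_permutes[OF ph]) (use ph2 in simp)
    have X2eq: "X2 = pm k1 \<alpha> * X1 * pm c (inv_into UNIV \<psi>)"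
    proof (rule sand_eq[OF al psi X1c X2c])
      fix i j assume i: "i < k1" and j: "j < c"
      have "X2 $$ (i,j) = B $$ (k1+i, k2+k2+j)" using i j bnd by (simp add: hB)
      also have "\<dots> = A $$ (\<pi> (k1+i), \<phi> (k2+k2+j))" using i j bnd by (intro hBA) auto
      also have "\<dots> = X1 $$ (\<alpha> i, \<psi> j)"
        using pi2[OF i] pin[OF bnd(2)[OF i]] ph3[of "k2+k2+j"] phn[OF bnd(6)[OF j]] i j bnd
        by (simp add: hA \<alpha>_def \<psi>_def rs_apply)
      finally show "X2 $$ (i,j) = X1 $$ (\<alpha> i, \<psi> j)" .
    qed
    have X1eq: "X1 = pm k1 \<beta> * X2 * pm c (inv_into UNIV \<psi>)"
    proof (rule sand_eq[OF be psi X2c X1c])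
      fix i j assume i: "i < k1" and j: "j < c"
      have "X1 $$ (i,j) = B $$ (i, k2+k2+j)" using i j bnd by (simp add: hB)
      also have "\<dots> = A $$ (\<pi> i, \<phi> (k2+k2+j))" using i j bnd by (intro hBA) auto
      also have "\<dots> = X2 $$ (\<beta> i, \<psi> j)"
        using pi1[OF i] pin[OF bnd(1)[OF i]] ph3[of "k2+k2+j"] phn[OF bnd(6)[OF j]] i j bnd
        by (simp add: hA \<beta>_def \<psi>_def rs_apply)
      finally show "X1 $$ (i,j) = X2 $$ (\<beta> i, \<psi> j)" .
    qed
    have X3eq: "X3 = pm r \<rho> * X3 * pm k2 (inv_into UNIV \<gamma>)"
    proof (rule sand_eq[OF rho ga X3c X3c])
      fix i j assume i: "i < r" and j: "j < k2"
      have "X3 $$ (i,j) = B $$ (k1+k1+i, j)" using i j bnd by (simp add: hB)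
      also have "\<dots> = A $$ (\<pi> (k1+k1+i), \<phi> j)" using i j bnd by (intro hBA) auto
      also have "\<dots> = X3 $$ (\<rho> i, \<gamma> j)"
        using pi3[of "k1+k1+i"] pin[OF bnd(3)[OF i]] ph1[OF j] phn[OF bnd(4)[OF j]] i j bnd
        by (simp add: hA \<rho>_def \<gamma>_def rs_apply)
      finally show "X3 $$ (i,j) = X3 $$ (\<rho> i, \<gamma> j)" .
    qed
    have X4eq: "X4 = pm r \<rho> * X4 * pm k2 (inv_into UNIV \<delta>)"
    proof (rule sand_eq[OF rho de X4c X4c])
      fix i j assume i: "i < r" and j: "j < k2"
      have "X4 $$ (i,j) = B $$ (k1+k1+i, k2+j)" using i j bnd by (simp add: hB)
      also have "\<dots> = A $$ (\<pi> (k1+k1+i), \<phi> (k2+j))" using i j bnd by (intro hBA) auto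
      also have "\<dots> = X4 $$ (\<rho> i, \<delta> j)"
        using pi3[of "k1+k1+i"] pin[OF bnd(3)[OF i]] ph2[OF j] phn[OF bnd(5)[OF j]] i j bnd
        by (simp add: hA \<rho>_def \<delta>_def rs_apply)
      finally show "X4 $$ (i,j) = X4 $$ (\<rho> i, \<delta> j)" .
    qed
    have R: "(pm k1 \<alpha>, pm k1 \<beta>, pm c (inv_into UNIV \<psi>)) \<in> R_set k1 c X1 X2"
      unfolding R_set_def using pm_perm_mat[OF al] pm_perm_mat[OF be] Qc X2eq X1eq by blast
    have L: "(pm r \<rho>, pm k2 (inv_into UNIV \<gamma>), pm k2 (inv_into UNIV \<delta>)) \<in> L_set r k2 X3 X4"
      unfolding L_set_def using Pr pm_perm_mat[OF permutes_inv[OF ga]] pm_perm_mat[OF permutes_inv[OF de]]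
        X3eq X4eq by blast
    show ?thesis unfolding fixable_def using Pr Qc Yeq R L by blast
  next
    assume c: "cc = -1"
    have ph1: "k2 \<le> \<phi> j \<and> \<phi> j < k2 + k2" if "j < k2" for j
      using zf[rule_format, of j] zj[of j] zj[of "\<phi> j"] phn[of j] that c bnd(4)[OF that]
      by (auto split: if_splits)
    have ph2: "\<phi> (k2 + j) < k2" if "j < k2" for j
      using zf[rule_format, of "k2+j"] zj[of "k2+j"] zj[of "\<phi> (k2+j)"] phn[of "k2+j"] that c bnd(5)[OF that]
      by (auto split: if_splits)
    have pi1: "\<pi> i < k1" if "i < k1" for i
      using wf[rule_format, of i] wi[of i] wi[of "\<pi> i"] pin[of i] that c bnd(1)[OF that]
      by (auto split: if_splits)
    have pi2: "k1 \<le> \<pi> (k1 + i) \<and> \<pi> (k1 + i) < k1 + k1" if "i < k1" for i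
      using wf[rule_format, of "k1+i"] wi[of "k1+i"] wi[of "\<pi> (k1+i)"] pin[of "k1+i"] that c bnd(2)[OF that]
      by (auto split: if_splits)
    define \<alpha> where "\<alpha> = rs \<pi> 0 0 k1"
    define \<beta> where "\<beta> = rs \<pi> k1 k1 k1"
    define \<gamma> where "\<gamma> = rs \<phi> k2 0 k2"
    define \<delta> where "\<delta> = rs \<phi> 0 k2 k2"
    have al: "\<alpha> permutes {..<k1}" unfolding \<alpha>_def by (rule rs_permutes[OF pi]) (use pi1 in simp)
    have be: "\<beta> permutes {..<k1}" unfolding \<beta>_def by (rule rs_permutes[OF pi]) (use pi2 in simp)
    have ga: "\<gamma> permutes {..<k2}" unfolding \<gamma>_def by (rule rs_permutes[OF ph]) (use ph2 in simp)
    have de: "\<delta> permutes {..<k2}" unfolding \<delta>_def by (rule rs_permutes[OF ph]) (use ph1 in simp)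
    have X3t: "transpose_mat X3 \<in> carrier_mat k2 r" using X3c by simp
    have X4t: "transpose_mat X4 \<in> carrier_mat k2 r" using X4c by simp
    have X1t: "transpose_mat X1 \<in> carrier_mat c k1" using X1c by simp
    have X2t: "transpose_mat X2 \<in> carrier_mat c k1" using X2c by simp
    have X4eq: "transpose_mat X4 = pm k2 \<gamma> * transpose_mat X3 * pm r (inv_into UNIV \<rho>)"
    proof (rule sand_eq[OF ga rho X3t X4t])
      fix i j assume i: "i < k2" and j: "j < r"
      have "transpose_mat X4 $$ (i,j) = B $$ (k1+k1+j, k2+i)" using i j bnd X4c by (simp add: hB)
      also have "\<dots> = A $$ (\<pi> (k1+k1+j), \<phi> (k2+i))" using i j bnd by (intro hBA) auto
      also have "\<dots> = transpose_mat X3 $$ (\<gamma> i, \<rho> j)"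
        using pi3[of "k1+k1+j"] pin[OF bnd(3)[OF j]] ph2[OF i] phn[OF bnd(5)[OF i]] i j bnd X3c
          permutes_in_image[OF ga, of i] permutes_in_image[OF rho, of j]
        by (simp add: hA \<rho>_def \<gamma>_def rs_apply)
      finally show "transpose_mat X4 $$ (i,j) = transpose_mat X3 $$ (\<gamma> i, \<rho> j)" .
    qed
    have X3eq: "transpose_mat X3 = pm k2 \<delta> * transpose_mat X4 * pm r (inv_into UNIV \<rho>)"
    proof (rule sand_eq[OF de rho X4t X3t])
      fix i j assume i: "i < k2" and j: "j < r"
      have "transpose_mat X3 $$ (i,j) = B $$ (k1+k1+j, i)" using i j bnd X3c by (simp add: hB)
      also have "\<dots> = A $$ (\<pi> (k1+k1+j), \<phi> i)" using i j bnd by (intro hBA) auto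
      also have "\<dots> = transpose_mat X4 $$ (\<delta> i, \<rho> j)"
        using pi3[of "k1+k1+j"] pin[OF bnd(3)[OF j]] ph1[OF i] phn[OF bnd(4)[OF i]] i j bnd X4c
          permutes_in_image[OF de, of i] permutes_in_image[OF rho, of j]
        by (simp add: hA \<rho>_def \<delta>_def rs_apply)
      finally show "transpose_mat X3 $$ (i,j) = transpose_mat X4 $$ (\<delta> i, \<rho> j)" .
    qed
    have X1eq: "transpose_mat X1 = pm c \<psi> * transpose_mat X1 * pm k1 (inv_into UNIV \<alpha>)"
    proof (rule sand_eq[OF psi al X1t X1t])
      fix i j assume i: "i < c" and j: "j < k1"
      have "transpose_mat X1 $$ (i,j) = B $$ (j, k2+k2+i)" using i j bnd X1c by (simp add: hB)
      also have "\<dots> = A $$ (\<pi> j, \<phi> (k2+k2+i))" using i j bnd by (intro hBA) auto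
      also have "\<dots> = transpose_mat X1 $$ (\<psi> i, \<alpha> j)"
        using pi1[OF j] pin[OF bnd(1)[OF j]] ph3[of "k2+k2+i"] phn[OF bnd(6)[OF i]] i j bnd X1c
          permutes_in_image[OF psi, of i] permutes_in_image[OF al, of j]
        by (simp add: hA \<alpha>_def \<psi>_def rs_apply)
      finally show "transpose_mat X1 $$ (i,j) = transpose_mat X1 $$ (\<psi> i, \<alpha> j)" .
    qed
    have X2eq: "transpose_mat X2 = pm c \<psi> * transpose_mat X2 * pm k1 (inv_into UNIV \<beta>)"
    proof (rule sand_eq[OF psi be X2t X2t])
      fix i j assume i: "i < c" and j: "j < k1"
      have "transpose_mat X2 $$ (i,j) = B $$ (k1+j, k2+k2+i)" using i j bnd X2c by (simp add: hB)
      also have "\<dots> = A $$ (\<pi> (k1+j), \<phi> (k2+k2+i))" using i j bnd by (intro hBA) auto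
      also have "\<dots> = transpose_mat X2 $$ (\<psi> i, \<beta> j)"
        using pi2[OF j] pin[OF bnd(2)[OF j]] ph3[of "k2+k2+i"] phn[OF bnd(6)[OF i]] i j bnd X2c
          permutes_in_image[OF psi, of i] permutes_in_image[OF be, of j]
        by (simp add: hA \<beta>_def \<psi>_def rs_apply)
      finally show "transpose_mat X2 $$ (i,j) = transpose_mat X2 $$ (\<psi> i, \<beta> j)" .
    qed
    have tP: "transpose_mat (pm r \<rho>) = pm r (inv_into UNIV \<rho>)" by (rule pm_transpose[OF rho])
    have tQ: "transpose_mat (pm c (inv_into UNIV \<psi>)) = pm c \<psi>"
      using pm_transpose[OF permutes_inv[OF psi]] permutes_inv_inv[OF psi] by simp
    have R: "(pm k2 \<gamma>, pm k2 \<delta>, transpose_mat (pm r \<rho>)) \<in> R_set k2 r (transpose_mat X3) (transpose_mat X4)"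
      unfolding R_set_def tP using pm_perm_mat[OF ga] pm_perm_mat[OF de] pm_perm_mat[OF permutes_inv[OF rho]]
        X4eq X3eq by blast
    have L: "(transpose_mat (pm c (inv_into UNIV \<psi>)), pm k1 (inv_into UNIV \<alpha>), pm k1 (inv_into UNIV \<beta>))
        \<in> L_set c k1 (transpose_mat X1) (transpose_mat X2)"
      unfolding L_set_def tQ using pm_perm_mat[OF psi] pm_perm_mat[OF permutes_inv[OF al]]
        pm_perm_mat[OF permutes_inv[OF be]] X1eq X2eq by blast
    show ?thesis unfolding fixable_def using Pr Qc Yeq R L by blast
  qed
qed


lemma bwd:
  assumes fx: "fixable k1 k2 r c X1 X2 X3 X4 Y"
  shows "isomorphic n n A B"
proof -
  obtain P Q where P: "perm_mat r P" and Q: "perm_mat c Q" and YPQ: "Y = P * Y * Q"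
    and disj: "(\<exists>P1 P2 Q3 Q4. (P1,P2,Q) \<in> R_set k1 c X1 X2 \<and> (P,Q3,Q4) \<in> L_set r k2 X3 X4)
         \<or> (\<exists>P1 P2 Q3 Q4. (Q3,Q4,transpose_mat P) \<in> R_set k2 r (transpose_mat X3) (transpose_mat X4)
                  \<and> (transpose_mat Q,P1,P2) \<in> L_set c k1 (transpose_mat X1) (transpose_mat X2))"
    using fx unfolding fixable_def by blast
  obtain \<rho> where rho: "\<rho> permutes {..<r}" and Pr: "P = pm r \<rho>" using perm_mat_pm[OF P] by blast
  obtain q where q: "q permutes {..<c}" and Qq: "Q = pm c q" using perm_mat_pm[OF Q] by blast
  define \<psi> where "\<psi> = inv_into UNIV q"
  have psi: "\<psi> permutes {..<c}" unfolding \<psi>_def by (rule permutes_inv[OF q])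
  have Qp: "Q = pm c (inv_into UNIV \<psi>)" unfolding Qq \<psi>_def permutes_inv_inv[OF q] ..
  have Yf: "\<And>i j. i < r \<Longrightarrow> j < c \<Longrightarrow> Y $$ (i,j) = Y $$ (\<rho> i, \<psi> j)"
    using sand_eqD[OF rho psi Yc] YPQ unfolding Pr Qp by blast
  have rl: "\<And>i. i < r \<Longrightarrow> \<rho> i < r" using permutes_in_image[OF rho] by simp
  have pl: "\<And>i. i < c \<Longrightarrow> \<psi> i < c" using permutes_in_image[OF psi] by simp
  have nn1: "n = k1 + k1 + r" by (rule nk1)
  have nn2: "n = k2 + k2 + c" by (rule nk2)
  have Bgoal: "\<exists>\<pi> \<phi>. \<pi> permutes {..<n} \<and> \<phi> permutes {..<n} \<and> (\<forall>i<n. \<forall>j<n. B $$ (i,j) = A $$ (\<pi> i, \<phi> j))"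
    using disj
  proof
    assume "\<exists>P1 P2 Q3 Q4. (P1,P2,Q) \<in> R_set k1 c X1 X2 \<and> (P,Q3,Q4) \<in> L_set r k2 X3 X4"
    then obtain P1 P2 Q3 Q4 where P1: "perm_mat k1 P1" and P2: "perm_mat k1 P2"
      and e2: "X2 = P1 * X1 * Q" and e1: "X1 = P2 * X2 * Q"
      and Q3: "perm_mat k2 Q3" and Q4: "perm_mat k2 Q4" and e3: "X3 = P * X3 * Q3" and e4: "X4 = P * X4 * Q4"
      unfolding R_set_def L_set_def by blast
    obtain p1 where p1: "p1 permutes {..<k1}" and P1p: "P1 = pm k1 p1" using perm_mat_pm[OF P1] by blast
    obtain p2 where p2: "p2 permutes {..<k1}" and P2p: "P2 = pm k1 p2" using perm_mat_pm[OF P2] by blast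
    obtain q3 where q3: "q3 permutes {..<k2}" and Q3p: "Q3 = pm k2 q3" using perm_mat_pm[OF Q3] by blast
    obtain q4 where q4: "q4 permutes {..<k2}" and Q4p: "Q4 = pm k2 q4" using perm_mat_pm[OF Q4] by blast
    define \<gamma> where "\<gamma> = inv_into UNIV q3"
    define \<delta> where "\<delta> = inv_into UNIV q4"
    have ga: "\<gamma> permutes {..<k2}" unfolding \<gamma>_def by (rule permutes_inv[OF q3])
    have de: "\<delta> permutes {..<k2}" unfolding \<delta>_def by (rule permutes_inv[OF q4])
    have Q3g: "Q3 = pm k2 (inv_into UNIV \<gamma>)" unfolding Q3p \<gamma>_def permutes_inv_inv[OF q3] ..
    have Q4d: "Q4 = pm k2 (inv_into UNIV \<delta>)" unfolding Q4p \<delta>_def permutes_inv_inv[OF q4] ..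
    have f2: "\<And>i j. i < k1 \<Longrightarrow> j < c \<Longrightarrow> X2 $$ (i,j) = X1 $$ (p1 i, \<psi> j)"
      using sand_eqD[OF p1 psi X1c] e2 unfolding P1p Qp by blast
    have f1: "\<And>i j. i < k1 \<Longrightarrow> j < c \<Longrightarrow> X1 $$ (i,j) = X2 $$ (p2 i, \<psi> j)"
      using sand_eqD[OF p2 psi X2c] e1 unfolding P2p Qp by blast
    have f3: "\<And>i j. i < r \<Longrightarrow> j < k2 \<Longrightarrow> X3 $$ (i,j) = X3 $$ (\<rho> i, \<gamma> j)"
      using sand_eqD[OF rho ga X3c] e3 unfolding Pr Q3g by blast
    have f4: "\<And>i j. i < r \<Longrightarrow> j < k2 \<Longrightarrow> X4 $$ (i,j) = X4 $$ (\<rho> i, \<delta> j)"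
      using sand_eqD[OF rho de X4c] e4 unfolding Pr Q4d by blast
    have l1: "\<And>i. i < k1 \<Longrightarrow> p1 i < k1" using permutes_in_image[OF p1] by simp
    have l2: "\<And>i. i < k1 \<Longrightarrow> p2 i < k1" using permutes_in_image[OF p2] by simp
    have lg: "\<And>i. i < k2 \<Longrightarrow> \<gamma> i < k2" using permutes_in_image[OF ga] by simp
    have ld: "\<And>i. i < k2 \<Longrightarrow> \<delta> i < k2" using permutes_in_image[OF de] by simp
    define \<pi> where "\<pi> = (\<lambda>i. if i < k1 then k1 + p2 i else if i < k1 + k1 then p1 (i - k1)
     else if i < k1 + k1 + r then k1 + k1 + \<rho> (i - k1 - k1) else i)"
    define \<phi> where "\<phi> = (\<lambda>i. if i < k2 then \<gamma> i else if i < k2 + k2 then k2 + \<delta> (i - k2)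
     else if i < k2 + k2 + c then k2 + k2 + \<psi> (i - k2 - k2) else i)"
    have pi: "\<pi> permutes {..<n}" unfolding \<pi>_def nn1 by (rule block_perm_swap[OF p2 p1 rho])
    have ph: "\<phi> permutes {..<n}" unfolding \<phi>_def nn2 by (rule block_perm_id[OF ga de psi])
    have ent: "B $$ (i,j) = A $$ (\<pi> i, \<phi> j)" if i: "i < n" and j: "j < n" for i j
    proof -
      have i3: "i < k1 + k1 + r" using i nn1 by simp
      have j3: "j < k2 + k2 + c" using j nn2 by simp
      show ?thesis
      proof (rule reg3[OF i3])
        assume ia: "i < k1"
        show ?thesis
        proof (rule reg3[OF j3])
          assume ja: "j < k2"
          show ?thesis using ia ja i j l2[OF ia] lg[OF ja] nn1 nn2 by (simp add: hA hB \<pi>_def \<phi>_def)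
        next
          fix j' assume jj: "j = k2 + j'" and ja: "j' < k2"
          show ?thesis using ia ja i j jj l2[OF ia] ld[OF ja] nn1 nn2 by (simp add: hA hB \<pi>_def \<phi>_def)
        next
          fix j' assume jj: "j = k2 + k2 + j'" and ja: "j' < c"
          show ?thesis using ia ja i j jj l2[OF ia] pl[OF ja] nn1 nn2 f1[OF ia ja] by (simp add: hA hB \<pi>_def \<phi>_def)
        qed
      next
        fix i' assume ii: "i = k1 + i'" and ia: "i' < k1"
        show ?thesis
        proof (rule reg3[OF j3])
          assume ja: "j < k2"
          show ?thesis using ia ja i j ii l1[OF ia] lg[OF ja] nn1 nn2 by (simp add: hA hB \<pi>_def \<phi>_def)
        next
          fix j' assume jj: "j = k2 + j'" and ja: "j' < k2"
          show ?thesis using ia ja i j ii jj l1[OF ia] ld[OF ja] nn1 nn2 by (simp add: hA hB \<pi>_def \<phi>_def)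
        next
          fix j' assume jj: "j = k2 + k2 + j'" and ja: "j' < c"
          show ?thesis using ia ja i j ii jj l1[OF ia] pl[OF ja] nn1 nn2 f2[OF ia ja] by (simp add: hA hB \<pi>_def \<phi>_def)
        qed
      next
        fix i' assume ii: "i = k1 + k1 + i'" and ia: "i' < r"
        show ?thesis
        proof (rule reg3[OF j3])
          assume ja: "j < k2"
          show ?thesis using ia ja i j ii rl[OF ia] lg[OF ja] nn1 nn2 f3[OF ia ja] by (simp add: hA hB \<pi>_def \<phi>_def)
        next
          fix j' assume jj: "j = k2 + j'" and ja: "j' < k2"
          show ?thesis using ia ja i j ii jj rl[OF ia] ld[OF ja] nn1 nn2 f4[OF ia ja] by (simp add: hA hB \<pi>_def \<phi>_def)
        next
          fix j' assume jj: "j = k2 + k2 + j'" and ja: "j' < c"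
          show ?thesis using ia ja i j ii jj rl[OF ia] pl[OF ja] nn1 nn2 Yf[OF ia ja] by (simp add: hA hB \<pi>_def \<phi>_def)
        qed
      qed
    qed
    show ?thesis using pi ph ent by blast
  next
    assume "\<exists>P1 P2 Q3 Q4. (Q3,Q4,transpose_mat P) \<in> R_set k2 r (transpose_mat X3) (transpose_mat X4)
                  \<and> (transpose_mat Q,P1,P2) \<in> L_set c k1 (transpose_mat X1) (transpose_mat X2)"
    then obtain P1 P2 Q3 Q4 where Q3: "perm_mat k2 Q3" and Q4: "perm_mat k2 Q4"
      and e4: "transpose_mat X4 = Q3 * transpose_mat X3 * transpose_mat P"
      and e3: "transpose_mat X3 = Q4 * transpose_mat X4 * transpose_mat P"
      and P1: "perm_mat k1 P1" and P2: "perm_mat k1 P2"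
      and e1: "transpose_mat X1 = transpose_mat Q * transpose_mat X1 * P1"
      and e2: "transpose_mat X2 = transpose_mat Q * transpose_mat X2 * P2"
      unfolding R_set_def L_set_def by blast
    obtain p1 where p1: "p1 permutes {..<k1}" and P1p: "P1 = pm k1 p1" using perm_mat_pm[OF P1] by blast
    obtain p2 where p2: "p2 permutes {..<k1}" and P2p: "P2 = pm k1 p2" using perm_mat_pm[OF P2] by blast
    obtain g3 where g3: "g3 permutes {..<k2}" and Q3p: "Q3 = pm k2 g3" using perm_mat_pm[OF Q3] by blast
    obtain g4 where g4: "g4 permutes {..<k2}" and Q4p: "Q4 = pm k2 g4" using perm_mat_pm[OF Q4] by blast
    define \<alpha> where "\<alpha> = inv_into UNIV p1"
    define \<beta> where "\<beta> = inv_into UNIV p2"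
    have al: "\<alpha> permutes {..<k1}" unfolding \<alpha>_def by (rule permutes_inv[OF p1])
    have be: "\<beta> permutes {..<k1}" unfolding \<beta>_def by (rule permutes_inv[OF p2])
    have P1a: "P1 = pm k1 (inv_into UNIV \<alpha>)" unfolding P1p \<alpha>_def permutes_inv_inv[OF p1] ..
    have P2b: "P2 = pm k1 (inv_into UNIV \<beta>)" unfolding P2p \<beta>_def permutes_inv_inv[OF p2] ..
    have tP: "transpose_mat P = pm r (inv_into UNIV \<rho>)" unfolding Pr by (rule pm_transpose[OF rho])
    have tQ: "transpose_mat Q = pm c \<psi>"
      unfolding Qp using pm_transpose[OF permutes_inv[OF psi]] permutes_inv_inv[OF psi] by simp
    have X3t: "transpose_mat X3 \<in> carrier_mat k2 r" using X3c by simp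
    have X4t: "transpose_mat X4 \<in> carrier_mat k2 r" using X4c by simp
    have X1t: "transpose_mat X1 \<in> carrier_mat c k1" using X1c by simp
    have X2t: "transpose_mat X2 \<in> carrier_mat c k1" using X2c by simp
    have f4: "X4 $$ (j,i) = X3 $$ (\<rho> j, g3 i)" if i: "i < k2" and j: "j < r" for i j
    proof -
      have "transpose_mat X4 $$ (i,j) = transpose_mat X3 $$ (g3 i, \<rho> j)"
        using e4 unfolding Q3p tP by (rule sand_eqD[OF g3 rho X3t _ i j])
      then show ?thesis using i j rl[OF j] permutes_in_image[OF g3, of i] X3c X4c by simp
    qed
    have f3: "X3 $$ (j,i) = X4 $$ (\<rho> j, g4 i)" if i: "i < k2" and j: "j < r" for i j
    proof -
      have "transpose_mat X3 $$ (i,j) = transpose_mat X4 $$ (g4 i, \<rho> j)"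
        using e3 unfolding Q4p tP by (rule sand_eqD[OF g4 rho X4t _ i j])
      then show ?thesis using i j rl[OF j] permutes_in_image[OF g4, of i] X3c X4c by simp
    qed
    have f1: "X1 $$ (j,i) = X1 $$ (\<alpha> j, \<psi> i)" if i: "i < c" and j: "j < k1" for i j
    proof -
      have "transpose_mat X1 $$ (i,j) = transpose_mat X1 $$ (\<psi> i, \<alpha> j)"
        using e1 unfolding P1a tQ by (rule sand_eqD[OF psi al X1t _ i j])
      then show ?thesis using i j pl[OF i] permutes_in_image[OF al, of j] X1c by simp
    qed
    have f2: "X2 $$ (j,i) = X2 $$ (\<beta> j, \<psi> i)" if i: "i < c" and j: "j < k1" for i j
    proof -
      have "transpose_mat X2 $$ (i,j) = transpose_mat X2 $$ (\<psi> i, \<beta> j)"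
        using e2 unfolding P2b tQ by (rule sand_eqD[OF psi be X2t _ i j])
      then show ?thesis using i j pl[OF i] permutes_in_image[OF be, of j] X2c by simp
    qed
    have l1: "\<And>i. i < k1 \<Longrightarrow> \<alpha> i < k1" using permutes_in_image[OF al] by simp
    have l2: "\<And>i. i < k1 \<Longrightarrow> \<beta> i < k1" using permutes_in_image[OF be] by simp
    have lg: "\<And>i. i < k2 \<Longrightarrow> g3 i < k2" using permutes_in_image[OF g3] by simp
    have ld: "\<And>i. i < k2 \<Longrightarrow> g4 i < k2" using permutes_in_image[OF g4] by simp
    define \<pi> where "\<pi> = (\<lambda>i. if i < k1 then \<alpha> i else if i < k1 + k1 then k1 + \<beta> (i - k1)
     else if i < k1 + k1 + r then k1 + k1 + \<rho> (i - k1 - k1) else i)"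
    define \<phi> where "\<phi> = (\<lambda>i. if i < k2 then k2 + g4 i else if i < k2 + k2 then g3 (i - k2)
     else if i < k2 + k2 + c then k2 + k2 + \<psi> (i - k2 - k2) else i)"
    have pi: "\<pi> permutes {..<n}" unfolding \<pi>_def nn1 by (rule block_perm_id[OF al be rho])
    have ph: "\<phi> permutes {..<n}" unfolding \<phi>_def nn2 by (rule block_perm_swap[OF g4 g3 psi])
    have ent: "B $$ (i,j) = A $$ (\<pi> i, \<phi> j)" if i: "i < n" and j: "j < n" for i j
    proof -
      have i3: "i < k1 + k1 + r" using i nn1 by simp
      have j3: "j < k2 + k2 + c" using j nn2 by simp
      show ?thesis
      proof (rule reg3[OF i3])
        assume ia: "i < k1"
        show ?thesis
        proof (rule reg3[OF j3])
          assume ja: "j < k2"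
          show ?thesis using ia ja i j l1[OF ia] ld[OF ja] nn1 nn2 by (simp add: hA hB \<pi>_def \<phi>_def)
        next
          fix j' assume jj: "j = k2 + j'" and ja: "j' < k2"
          show ?thesis using ia ja i j jj l1[OF ia] lg[OF ja] nn1 nn2 by (simp add: hA hB \<pi>_def \<phi>_def)
        next
          fix j' assume jj: "j = k2 + k2 + j'" and ja: "j' < c"
          show ?thesis using ia ja i j jj l1[OF ia] pl[OF ja] nn1 nn2 f1[OF ja ia] by (simp add: hA hB \<pi>_def \<phi>_def)
        qed
      next
        fix i' assume ii: "i = k1 + i'" and ia: "i' < k1"
        show ?thesis
        proof (rule reg3[OF j3])
          assume ja: "j < k2"
          show ?thesis using ia ja i j ii l2[OF ia] ld[OF ja] nn1 nn2 by (simp add: hA hB \<pi>_def \<phi>_def)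
        next
          fix j' assume jj: "j = k2 + j'" and ja: "j' < k2"
          show ?thesis using ia ja i j ii jj l2[OF ia] lg[OF ja] nn1 nn2 by (simp add: hA hB \<pi>_def \<phi>_def)
        next
          fix j' assume jj: "j = k2 + k2 + j'" and ja: "j' < c"
          show ?thesis using ia ja i j ii jj l2[OF ia] pl[OF ja] nn1 nn2 f2[OF ja ia] by (simp add: hA hB \<pi>_def \<phi>_def)
        qed
      next
        fix i' assume ii: "i = k1 + k1 + i'" and ia: "i' < r"
        show ?thesis
        proof (rule reg3[OF j3])
          assume ja: "j < k2"
          show ?thesis using ia ja i j ii rl[OF ia] ld[OF ja] nn1 nn2 f3[OF ja ia] by (simp add: hA hB \<pi>_def \<phi>_def)
        next
          fix j' assume jj: "j = k2 + j'" and ja: "j' < k2"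
          show ?thesis using ia ja i j ii jj rl[OF ia] lg[OF ja] nn1 nn2 f4[OF ja ia] by (simp add: hA hB \<pi>_def \<phi>_def)
        next
          fix j' assume jj: "j = k2 + k2 + j'" and ja: "j' < c"
          show ?thesis using ia ja i j ii jj rl[OF ia] pl[OF ja] nn1 nn2 Yf[OF ia ja] by (simp add: hA hB \<pi>_def \<phi>_def)
        qed
      qed
    qed
    show ?thesis using pi ph ent by blast
  qed
  then obtain \<pi> \<phi> where pi: "\<pi> permutes {..<n}" and ph: "\<phi> permutes {..<n}"
    and ent: "\<forall>i<n. \<forall>j<n. B $$ (i,j) = A $$ (\<pi> i, \<phi> j)" by blast
  have "B = pm n \<pi> * A * pm n (inv_into UNIV \<phi>)"
    by (rule sand_eq[OF pi ph Ac Bc]) (use ent in blast)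
  then show ?thesis unfolding isomorphic_def
    using pm_perm_mat[OF pi] pm_perm_mat[OF permutes_inv[OF ph]] by blast
qed

end

theorem theorem6p10:
  fixes n k1 k2 r c :: nat
    and X1 X2 X3 X4 Y A B :: "real mat"
  assumes "k1 > 0" and "k2 > 0"
    and "n = 2 * k1 + r" and "n = 2 * k2 + c"
    and "zo_mat k1 c X1" and "zo_mat k1 c X2"
    and "zo_mat r k2 X3" and "zo_mat r k2 X4"
    and "zo_mat r c Y"
    and "transpose_mat X1 *\<^sub>v ones_vec k1 = transpose_mat X2 *\<^sub>v ones_vec k1"
    and "X3 *\<^sub>v ones_vec k2 = X4 *\<^sub>v ones_vec k2"
    and "A = block3 (0\<^sub>m k1 k2) (ones_mat k1 k2) X1
                    (ones_mat k1 k2) (0\<^sub>m k1 k2) X2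
                    X3 X4 Y"
    and "B = block3 (ones_mat k1 k2) (0\<^sub>m k1 k2) X1
                    (0\<^sub>m k1 k2) (ones_mat k1 k2) X2
                    X3 X4 Y"
    and "gram_mates A B"
    and "distinct_singular_values A"
    and "vec_space.rank n (A - B) = 1"
  shows "isomorphic n n A B \<longleftrightarrow> fixable k1 k2 r c X1 X2 X3 X4 Y"
proof -
  interpret gm_setting n k1 k2 r c X1 X2 X3 X4 Y A B
    by (unfold_locales) (rule assms)+
  show ?thesis using fwd bwd by blast
qed

end
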